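(* Let $p_{\mathrm{data}}$ be a probability density on $\mathbb R^d$, let $E_\theta:\mathbb R^d\to\mathbb R$ be an energy function such that $\mathbf{x}\mapsto\exp(-E_\theta(\mathbf{x}))$ is uniformly bounded, and fix $t>0$, $w\ge 0$. Let $\mathbf{x}^1,\mathbf{x}^2,\dots$ be i.i.d. from $p_{\mathrm{data}}$, and $\boldsymbol\xi^i$, $\boldsymbol\xi'^{i,j}$ ($i,j\ge1$) i.i.d. $\mathcal N(0,\mathbf I)$, all independent. Define $$\mathcal L_{t,M,w}(\theta):=\frac1N\sum_{i=1}^N\log\Big(\frac wM+\frac1M\sum_{j=1}^M\exp\big(E_\theta(\mathbf{x}^i)-E_\theta(\mathbf{x}^i+\sqrt t\,\boldsymbol\xi^i+\sqrt t\,\boldsymbol\xi'^{i,j})\big)\Big).$$ Then for every $\varepsilon>0$ there exist $N$ and $M(N)$ such that $\big|\mathcal L_{t,M(N),w}(\theta)-\mathrm{ED}_{\gamma_t}(p_{\mathrm{data}},E_\theta)\big|<\varepsilon$ almost surely.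
   Context: $\gamma_t(\mathbf{y}-\mathbf{x})=(2\pi t)^{-d/2}\exp(-\|\mathbf{y}-\mathbf{x}\|^2/2t)$ is the Gaussian transition density. For an energy $U$, $U_{\gamma_t}(\mathbf{y}):=-\log\int\gamma_t(\mathbf{y}-\mathbf{x})\exp(-U(\mathbf{x}))\,\mathrm d\mathbf{x}$ and $\mathrm{ED}_{\gamma_t}(p_{\mathrm{data}},U):=\mathbb E_{p_{\mathrm{data}}(\mathbf{x})}[U(\mathbf{x})]-\mathbb E_{p_{\mathrm{data}}(\mathbf{x})}\mathbb E_{\gamma_t(\mathbf{y}-\mathbf{x})}[U_{\gamma_t}(\mathbf{y})]$. *)

theory Defs
  imports "HOL-Probability.Probability"
begin

definition gauss_kernel :: "real \<Rightarrow> 'a::euclidean_space \<Rightarrow> real" where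
  "gauss_kernel t v = (2 * pi * t) powr (- real DIM('a) / 2) * exp (- (norm v)\<^sup>2 / (2 * t))"

definition U_gamma :: "real \<Rightarrow> ('a::euclidean_space \<Rightarrow> real) \<Rightarrow> 'a \<Rightarrow> real" where
  "U_gamma t U y = - ln (\<integral>x. gauss_kernel t (y - x) * exp (- U x) \<partial>lborel)"

definition ED_gamma :: "real \<Rightarrow> ('a::euclidean_space \<Rightarrow> real) \<Rightarrow> ('a \<Rightarrow> real) \<Rightarrow> real" where
  "ED_gamma t p U = (\<integral>x. p x * U x \<partial>lborel)
     - (\<integral>x. p x * (\<integral>y. gauss_kernel t (y - x) * U_gamma t U y \<partial>lborel) \<partial>lborel)"

text \<open>Index set for the family of random variables: data samples x^i, noises xi^i and xi'^{i,j}.\<close>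
datatype idx = Xs nat | Xi nat | Xi' nat nat

text \<open>Empirical loss L_{t,M,w}(theta) with N outer samples and M inner samples (0-based indices).\<close>
definition emp_loss :: "real \<Rightarrow> nat \<Rightarrow> real \<Rightarrow> ('a::euclidean_space \<Rightarrow> real)
     \<Rightarrow> (idx \<Rightarrow> 'w \<Rightarrow> 'a) \<Rightarrow> nat \<Rightarrow> 'w \<Rightarrow> real" where
  "emp_loss t M w E Z N \<omega> =
     (1 / real N) * (\<Sum>i<N. ln (w / real M + (1 / real M) *
        (\<Sum>j<M. exp (E (Z (Xs i) \<omega>)
                   - E (Z (Xs i) \<omega> + sqrt t *\<^sub>R Z (Xi i) \<omega> + sqrt t *\<^sub>R Z (Xi' i j) \<omega>)))))"

end

theory Submission
  imports Defs "HOL-Probability.Probability"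
begin


lemma cesaro_real:
  fixes a :: "nat \<Rightarrow> real"
  assumes "a \<longlonglongrightarrow> L"
  shows "(\<lambda>n. (\<Sum>i<n. a i) / real n) \<longlonglongrightarrow> L"
proof (rule LIMSEQ_I)
  fix r :: real assume r: "0 < r"
  from LIMSEQ_D[OF assms, of "r/2"] r obtain N0 where N0: "\<And>i. i \<ge> N0 \<Longrightarrow> \<bar>a i - L\<bar> < r/2"
    by auto
  define K where "K = (\<Sum>i<N0. \<bar>a i - L\<bar>)"
  have K0: "K \<ge> 0" unfolding K_def by (auto intro: sum_nonneg)
  obtain N1 :: nat where N1: "K / (r/2) < N1" using reals_Archimedean2 by blast
  show "\<exists>no. \<forall>n\<ge>no. norm ((\<Sum>i<n. a i) / real n - L) < r"
  proof (intro exI[of _ "max (Suc N0) N1"] allI impI)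
    fix n assume n: "max (Suc N0) N1 \<le> n"
    hence nN0: "N0 \<le> n" and npos: "real n > 0" and nN1: "real N1 \<le> real n" by auto
    have "(\<Sum>i<n. a i) / real n - L = (\<Sum>i<n. (a i - L)) / real n"
      using npos by (simp add: sum_subtractf field_simps)
    also have "(\<Sum>i<n. (a i - L)) = (\<Sum>i<N0. (a i - L)) + (\<Sum>i\<in>{N0..<n}. (a i - L))"
      using nN0 by (metis atLeast0LessThan sum.atLeastLessThan_concat zero_le)
    finally have eq: "(\<Sum>i<n. a i) / real n - L = ((\<Sum>i<N0. (a i - L)) + (\<Sum>i\<in>{N0..<n}. (a i - L))) / real n" .
    have b1: "\<bar>\<Sum>i<N0. (a i - L)\<bar> \<le> K" unfolding K_def by (rule sum_abs)
    have "\<bar>\<Sum>i\<in>{N0..<n}. (a i - L)\<bar> \<le> (\<Sum>i\<in>{N0..<n}. \<bar>a i - L\<bar>)" by (rule sum_abs)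
    also have "\<dots> \<le> (\<Sum>i\<in>{N0..<n}. r/2)" by (intro sum_mono) (meson N0 atLeastLessThan_iff less_eq_real_def)
    also have "\<dots> \<le> real n * (r/2)" using r by simp
    finally have b2: "\<bar>\<Sum>i\<in>{N0..<n}. (a i - L)\<bar> \<le> real n * (r/2)" .
    have "K < real n * (r/2)" using N1 nN1 r by (simp add: field_simps) (smt (verit) mult_left_mono of_nat_mono)
    hence "\<bar>(\<Sum>i<N0. (a i - L)) + (\<Sum>i\<in>{N0..<n}. (a i - L))\<bar> < real n * r"
      using b1 b2 by linarith
    thus "norm ((\<Sum>i<n. a i) / real n - L) < r"
      unfolding eq using npos by (simp add: field_simps abs_divide)
  qed
qed

lemma count_le:
  fixes x :: real assumes "0 \<le> x"
  shows "(\<Sum>k<n. (if real (Suc k) < x then 1 else 0::real)) \<le> min (real n) x"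
  by (induction n) (use assms in auto)


definition kk :: "real \<Rightarrow> nat \<Rightarrow> nat" where "kk a n = nat \<lfloor>a ^ n\<rfloor>"

lemma kk_ge1: "a > 1 \<Longrightarrow> 1 \<le> kk a n"
  unfolding kk_def by (simp add: le_nat_iff one_le_power)

lemma kk_le: "a > 1 \<Longrightarrow> real (kk a n) \<le> a ^ n"
proof -
  assume a: "a > 1"
  have y1: "1 \<le> a ^ n" using a by (simp add: one_le_power)
  have "real (kk a n) = of_int \<lfloor>a ^ n\<rfloor>" unfolding kk_def using y1 by simp
  then show ?thesis by simp
qed

lemma kk_ge: "a > 1 \<Longrightarrow> a ^ n / 2 \<le> real (kk a n)"
proof -
  assume a: "a > 1"
  have y1: "1 \<le> a ^ n" using a by (simp add: one_le_power)
  have "real (kk a n) = of_int \<lfloor>a ^ n\<rfloor>" unfolding kk_def using y1 by simp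
  moreover have "a ^ n - 1 < of_int \<lfloor>a ^ n\<rfloor>" by linarith
  moreover have "1 \<le> \<lfloor>a ^ n\<rfloor>" using y1 by (simp add: le_floor_iff)
  hence "1 \<le> (of_int \<lfloor>a ^ n\<rfloor> :: real)" by linarith
  ultimately show ?thesis by linarith
qed

lemma kk_mono: "a > 1 \<Longrightarrow> mono (kk a)"
  unfolding kk_def mono_def
  by (intro allI impI nat_mono floor_mono power_increasing) auto

lemma kk_at_top: "a > 1 \<Longrightarrow> filterlim (kk a) at_top sequentially"
proof -
  assume a: "a > 1"
  show ?thesis unfolding filterlim_at_top
  proof
    fix Z :: nat
    obtain n where n: "2 * real Z < a ^ n" using real_arch_pow[OF a] by blast
    show "eventually (\<lambda>m. Z \<le> kk a m) sequentially"
      unfolding eventually_sequentially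
    proof (intro exI allI impI)
      fix m assume "n \<le> m"
      hence "kk a n \<le> kk a m" using kk_mono[OF a] by (simp add: mono_def)
      moreover have "real Z < real (kk a n)" using kk_ge[OF a, of n] n by linarith
      ultimately show "Z \<le> kk a m" by linarith
    qed
  qed
qed

lemma kk_ratio: "a > 1 \<Longrightarrow> eventually (\<lambda>n. real (kk a (Suc n)) \<le> a^2 * real (kk a n)) sequentially"
proof -
  assume a: "a > 1"
  obtain n0 where n0: "a^2 / (a - 1) < a ^ n0" using real_arch_pow[OF a] by blast
  show ?thesis unfolding eventually_sequentially
  proof (intro exI allI impI)
    fix n assume "n0 \<le> n"
    hence "a ^ n0 \<le> a ^ n" using a by (simp add: power_increasing)
    hence "a^2 / (a - 1) < a^n" using n0 by linarith
    hence "a^2 < a^n * (a - 1)" using a by (simp add: divide_less_eq)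
    hence h: "a * a^2 < a * (a^n * (a - 1))" using a by simp
    have h2: "a^2 \<le> a * a^2" using a by (simp add: power2_eq_square)
    have e: "a^2 * (a^n - 1) - a^Suc n = a * (a^n*(a-1)) - a^2" by (simp add: algebra_simps power2_eq_square)
    have *: "a ^ Suc n \<le> a^2 * (a ^ n - 1)" using h h2 e by linarith
    have "real (kk a n) = of_int \<lfloor>a ^ n\<rfloor>" unfolding kk_def using a by (simp add: one_le_power)
    moreover have "a ^ n - 1 < of_int \<lfloor>a ^ n\<rfloor>" by linarith
    ultimately have "a ^ n - 1 \<le> real (kk a n)" by linarith
    hence "a^2 * (a ^ n - 1) \<le> a^2 * real (kk a n)" by (intro mult_left_mono) auto
    thus "real (kk a (Suc n)) \<le> a^2 * real (kk a n)" using kk_le[OF a, of "Suc n"] * by linarith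
  qed
qed

lemma geo_sum_shift:
  fixes q :: real assumes "0 \<le> q" "q < 1"
  shows "(\<Sum>n<N. (if n0 \<le> n then q ^ (n - n0) else 0)) = (if n0 \<le> N then (1 - q ^ (N - n0)) / (1 - q) else 0)"
proof (induction N)
  case 0 then show ?case by simp
next
  case (Suc N)
  show ?case
  proof (cases "n0 \<le> N")
    case True
    then have e: "Suc N - n0 = Suc (N - n0)" by simp
    have IH: "(\<Sum>n<N. (if n0 \<le> n then q ^ (n - n0) else 0)) = (1 - q ^ (N - n0)) / (1 - q)"
      using Suc True by simp
    have "(\<Sum>n<Suc N. (if n0 \<le> n then q ^ (n - n0) else 0)) = (1 - q ^ (N - n0)) / (1 - q) + q ^ (N - n0)"
      using IH True by simp
    also have "\<dots> = (1 - q ^ (Suc N - n0)) / (1 - q)" unfolding e using assms by (simp add: field_simps)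
    finally show ?thesis using True by simp
  next
    case False
    then show ?thesis using Suc by (cases "n0 = Suc N") auto
  qed
qed

lemma geo_sum_shift_le:
  fixes q :: real assumes "0 \<le> q" "q < 1"
  shows "(\<Sum>n<N. (if n0 \<le> n then q ^ (n - n0) else 0)) \<le> 1 / (1 - q)"
  unfolding geo_sum_shift[OF assms] using assms by (auto simp: divide_right_mono)


lemma geo_bound:
  fixes a x :: real assumes a: "a > 1" and x: "0 < x"
  shows "(\<Sum>n<N. (if x \<le> a ^ n then x / a ^ n else 0)) \<le> a / (a - 1)"
proof -
  have ex: "\<exists>n. x \<le> a ^ n" using real_arch_pow[OF a, of x] by (auto intro: less_imp_le)
  define n0 where "n0 = (LEAST n. x \<le> a ^ n)"
  have xn0: "x \<le> a ^ n0" unfolding n0_def by (rule LeastI_ex[OF ex])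
  have "(\<Sum>n<N. (if x \<le> a ^ n then x / a ^ n else 0)) \<le> (\<Sum>n<N. (if n0 \<le> n then (1/a) ^ (n - n0) else 0))"
  proof (rule sum_mono)
    fix n assume "n \<in> {..<N}"
    show "(if x \<le> a ^ n then x / a ^ n else 0) \<le> (if n0 \<le> n then (1/a) ^ (n - n0) else 0)"
    proof (cases "x \<le> a ^ n")
      case True
      hence nn0: "n0 \<le> n" unfolding n0_def by (rule Least_le)
      have "x / a ^ n \<le> a ^ n0 / a ^ n" using xn0 a by (simp add: divide_right_mono)
      also have "a ^ n0 / a ^ n = (1/a) ^ (n - n0)"
        using nn0 a by (simp add: power_diff power_one_over)
      finally show ?thesis using True nn0 by simp
    qed (use a in auto)
  qed
  also have "\<dots> \<le> 1 / (1 - 1/a)" by (rule geo_sum_shift_le) (use a in auto)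
  also have "1 / (1 - 1/a) = a / (a - 1)" using a by (simp add: field_simps)
  finally show ?thesis .
qed

lemma trunc_var_bound:
  fixes a x :: real assumes a: "a > 1" and x: "0 \<le> x"
  shows "(\<Sum>n<N. \<Sum>k<kk a n. (if x \<le> real (Suc k) then x^2 / (real (kk a n))^2 else 0))
          \<le> 2 * a / (a - 1) * x"
proof (cases "x = 0")
  case True then show ?thesis by simp
next
  case False
  hence xp: "x > 0" using x by simp
  have "(\<Sum>n<N. \<Sum>k<kk a n. (if x \<le> real (Suc k) then x^2 / (real (kk a n))^2 else 0))
        \<le> (\<Sum>n<N. 2 * x * (if x \<le> a ^ n then x / a ^ n else 0))"
  proof (rule sum_mono)
    fix n assume "n \<in> {..<N}"
    have k1: "1 \<le> real (kk a n)" using kk_ge1[OF a, of n] by simp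
    show "(\<Sum>k<kk a n. (if x \<le> real (Suc k) then x^2 / (real (kk a n))^2 else 0))
          \<le> 2 * x * (if x \<le> a ^ n then x / a ^ n else 0)"
    proof (cases "x \<le> real (kk a n)")
      case True
      have "(\<Sum>k<kk a n. (if x \<le> real (Suc k) then x^2 / (real (kk a n))^2 else 0))
             \<le> (\<Sum>k<kk a n. x^2 / (real (kk a n))^2)" by (intro sum_mono) auto
      also have "\<dots> = x^2 / real (kk a n)" using k1 by (simp add: power2_eq_square)
      also have "\<dots> \<le> x^2 / (a ^ n / 2)"
      proof -
        have "0 < real (kk a n) * a ^ n" using k1 a by (intro mult_pos_pos) auto
        then show ?thesis using kk_ge[OF a, of n] a xp by (intro divide_left_mono) auto
      qed
      also have "\<dots> = 2 * x * (x / a ^ n)" by (simp add: power2_eq_square)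
      finally show ?thesis using True kk_le[OF a, of n] by auto
    next
      case False
      hence "(\<Sum>k<kk a n. (if x \<le> real (Suc k) then x^2 / (real (kk a n))^2 else 0)) = 0"
        by (intro sum.neutral) auto
      then show ?thesis using xp a by (auto intro!: mult_nonneg_nonneg divide_nonneg_nonneg)
    qed
  qed
  also have "\<dots> = 2 * x * (\<Sum>n<N. (if x \<le> a ^ n then x / a ^ n else 0))" by (simp add: sum_distrib_left)
  also have "\<dots> \<le> 2 * x * (a / (a - 1))" using geo_bound[OF a xp] xp by (intro mult_left_mono) auto
  also have "2 * x * (a / (a - 1)) = 2 * a / (a - 1) * x" by simp
  finally show ?thesis .
qed


lemma interp_fixed:
  fixes T :: "nat \<Rightarrow> real" and a \<mu> \<eta> :: real
  assumes a: "a > 1" and mono: "\<And>m n. m \<le> n \<Longrightarrow> T m \<le> T n" and nonneg: "\<And>n. 0 \<le> T n"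
    and \<eta>: "\<eta> > 0" and lim: "(\<lambda>m. T (kk a m) / real (kk a m)) \<longlonglongrightarrow> \<mu>"
  shows "eventually (\<lambda>n. (\<mu> - \<eta>) / a^2 \<le> T n / real n \<and> T n / real n \<le> a^2 * (\<mu> + \<eta>)) sequentially"
proof -
  let ?k = "kk a"
  have ev: "eventually (\<lambda>m. \<bar>T (?k m) / real (?k m) - \<mu>\<bar> < \<eta> \<and> real (?k (Suc m)) \<le> a^2 * real (?k m)) sequentially"
    using LIMSEQ_D[OF lim \<eta>] kk_ratio[OF a] by (auto simp: eventually_sequentially eventually_conj_iff) 
  then obtain m0 where m0: "\<And>m. m \<ge> m0 \<Longrightarrow> \<bar>T (?k m) / real (?k m) - \<mu>\<bar> < \<eta> \<and> real (?k (Suc m)) \<le> a^2 * real (?k m)"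
    by (auto simp: eventually_sequentially)
  have kmono: "\<And>m n. m \<le> n \<Longrightarrow> ?k m \<le> ?k n" using kk_mono[OF a] by (auto simp: mono_def)
  have kpos: "\<And>m. 1 \<le> ?k m" using kk_ge1[OF a] .
  have k0: "?k 0 = 1" by (simp add: kk_def)
  have a2: "a^2 > 0" using a by simp
  show ?thesis unfolding eventually_sequentially
  proof (intro exI[of _ "?k (Suc m0)"] allI impI)
    fix n assume n: "?k (Suc m0) \<le> n"
    have exm: "\<exists>m. n < ?k (Suc m)"
    proof -
      from filterlim_at_top[THEN iffD1, OF kk_at_top[OF a], rule_format, of "Suc n"]
      obtain m where "Suc n \<le> ?k m" by (auto simp: eventually_sequentially)
      hence "n < ?k (Suc m)" using kmono[of m "Suc m"] by simp
      thus ?thesis by blast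
    qed
    define m where "m = (LEAST m. n < ?k (Suc m))"
    have up: "n < ?k (Suc m)" unfolding m_def by (rule LeastI_ex[OF exm])
    have low: "?k m \<le> n"
    proof (cases m)
      case 0 then show ?thesis using k0 n kpos[of "Suc m0"] by simp
    next
      case (Suc m')
      have "\<not> n < ?k (Suc m')" using not_less_Least[of m' "\<lambda>m. n < ?k (Suc m)"] Suc unfolding m_def by simp
      then show ?thesis using Suc by simp
    qed
    have mm0: "m0 \<le> m"
    proof (rule ccontr)
      assume "\<not> m0 \<le> m"
      hence "Suc m \<le> m0" by simp
      hence "?k (Suc m) \<le> ?k (Suc m0)" using kmono by simp
      with up n show False by simp
    qed
    have npos: "real n > 0" using low kpos[of m] by simp
    have km: "real (?k m) \<ge> 1" using kpos[of m] by simp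
    have km1: "real (?k (Suc m)) \<ge> 1" using kpos[of "Suc m"] by simp
    have r1: "real (?k (Suc m)) \<le> a^2 * real (?k m)" using m0[OF mm0] by simp
    have b1: "T (?k (Suc m)) / real (?k (Suc m)) < \<mu> + \<eta>" using m0[of "Suc m"] mm0 by auto
    have b0: "\<mu> - \<eta> < T (?k m) / real (?k m)" using m0[OF mm0] by auto
    have "T n / real n \<le> T (?k (Suc m)) / real (?k m)"
      using mono[of n "?k (Suc m)"] up low npos km nonneg[of "?k (Suc m)"]
      by (intro frac_le) auto
    also have "\<dots> = (T (?k (Suc m)) / real (?k (Suc m))) * (real (?k (Suc m)) / real (?k m))"
      using km1 by simp
    also have "\<dots> \<le> (\<mu> + \<eta>) * a^2"
    proof (rule mult_mono)
      show "real (?k (Suc m)) / real (?k m) \<le> a^2" using r1 km by (simp add: divide_le_eq)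
      show "0 \<le> \<mu> + \<eta>" using b1 nonneg[of "?k (Suc m)"] km1
        by (smt (verit) divide_nonneg_nonneg of_nat_0_le_iff)
    qed (use b1 km nonneg in auto)
    finally have U: "T n / real n \<le> a^2 * (\<mu> + \<eta>)" by (simp add: mult.commute)
    have "(\<mu> - \<eta>) / a^2 \<le> (T (?k m) / real (?k m)) / a^2"
      using b0 a2 by (intro divide_right_mono) auto
    also have "\<dots> = T (?k m) / (a^2 * real (?k m))" by simp
    also have "\<dots> \<le> T (?k m) / real (?k (Suc m))"
      using r1 km1 nonneg[of "?k m"] by (intro divide_left_mono) auto
    also have "\<dots> \<le> T n / real n"
      using mono[of "?k m" n] up low npos km1 nonneg[of "?k m"]
      by (intro frac_le) auto
    finally show "(\<mu> - \<eta>) / a^2 \<le> T n / real n \<and> T n / real n \<le> a^2 * (\<mu> + \<eta>)" using U by simp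
  qed
qed

lemma interp:
  fixes T :: "nat \<Rightarrow> real" and \<mu> :: real
  assumes mono: "\<And>m n. m \<le> n \<Longrightarrow> T m \<le> T n" and nonneg: "\<And>n. 0 \<le> T n"
    and lim: "\<And>j. (\<lambda>m. T (kk (1 + 1 / real (Suc j)) m) / real (kk (1 + 1 / real (Suc j)) m)) \<longlonglongrightarrow> \<mu>"
  shows "(\<lambda>n. T n / real n) \<longlonglongrightarrow> \<mu>"
proof (rule LIMSEQ_I)
  fix r :: real assume r: "0 < r"
  define a where "a j = 1 + 1 / real (Suc j)" for j
  define e where "e j = 1 / real (Suc j)" for j
  have e0: "e \<longlonglongrightarrow> 0" unfolding e_def using LIMSEQ_inverse_real_of_nat by (simp add: inverse_eq_divide)
  have a1: "a \<longlonglongrightarrow> 1" unfolding a_def using tendsto_add[OF tendsto_const e0[unfolded e_def], of 1] by simp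
  have U: "(\<lambda>j. (a j)^2 * (\<mu> + e j)) \<longlonglongrightarrow> \<mu>"
    using tendsto_mult[OF tendsto_power[OF a1, of 2] tendsto_add[OF tendsto_const e0, of \<mu>]] by simp
  have L: "(\<lambda>j. (\<mu> - e j) / (a j)^2) \<longlonglongrightarrow> \<mu>"
    using tendsto_divide[OF tendsto_diff[OF tendsto_const e0, of \<mu>] tendsto_power[OF a1, of 2]] by simp
  have "eventually (\<lambda>j. (a j)^2 * (\<mu> + e j) < \<mu> + r \<and> \<mu> - r < (\<mu> - e j) / (a j)^2) sequentially"
    using order_tendstoD(2)[OF U, of "\<mu> + r"] order_tendstoD(1)[OF L, of "\<mu> - r"] r
    by (auto elim: eventually_elim2)
  then obtain j where j: "(a j)^2 * (\<mu> + e j) < \<mu> + r" "\<mu> - r < (\<mu> - e j) / (a j)^2"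
    by (auto simp: eventually_sequentially)
  have aj: "a j > 1" and ej: "e j > 0" by (auto simp: a_def e_def)
  from interp_fixed[OF aj mono nonneg ej lim[of j, folded a_def]]
  obtain N where N: "\<And>n. n \<ge> N \<Longrightarrow> (\<mu> - e j) / (a j)^2 \<le> T n / real n \<and> T n / real n \<le> (a j)^2 * (\<mu> + e j)"
    by (auto simp: eventually_sequentially)
  show "\<exists>no. \<forall>n\<ge>no. norm (T n / real n - \<mu>) < r"
  proof (intro exI allI impI)
    fix n assume "N \<le> n"
    from N[OF this] j show "norm (T n / real n - \<mu>) < r" by auto
  qed
qed


context prob_space begin

lemma sum_sq_indep:
  fixes D :: "'i \<Rightarrow> 'a \<Rightarrow> real"
  assumes fin: "finite I"
    and meas: "\<And>i. i \<in> I \<Longrightarrow> D i \<in> borel_measurable M"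
    and bnd: "\<And>i \<omega>. i \<in> I \<Longrightarrow> \<bar>D i \<omega>\<bar> \<le> B i"
    and zero: "\<And>i. i \<in> I \<Longrightarrow> expectation (D i) = 0"
    and ind: "\<And>i j. i \<in> I \<Longrightarrow> j \<in> I \<Longrightarrow> i \<noteq> j \<Longrightarrow> indep_var borel (D i) borel (D j)"
  shows "expectation (\<lambda>\<omega>. (\<Sum>i\<in>I. D i \<omega>)^2) = (\<Sum>i\<in>I. expectation (\<lambda>\<omega>. (D i \<omega>)^2))"
proof -
  have intD: "integrable M (D i)" if "i \<in> I" for i
    using that bnd meas by (intro integrable_const_bound[where B="B i"]) auto
  have intDD: "integrable M (\<lambda>\<omega>. D i \<omega> * D j \<omega>)" if "i \<in> I" "j \<in> I" for i j
    using that bnd meas by (intro integrable_const_bound[where B="B i * B j"])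
      (auto simp: abs_mult intro!: mult_mono order_trans[OF abs_ge_zero bnd])
  have "(\<lambda>\<omega>. (\<Sum>i\<in>I. D i \<omega>)^2) = (\<lambda>\<omega>. \<Sum>i\<in>I. \<Sum>j\<in>I. D i \<omega> * D j \<omega>)"
    by (simp add: power2_eq_square sum_product)
  hence "expectation (\<lambda>\<omega>. (\<Sum>i\<in>I. D i \<omega>)^2) = (\<Sum>i\<in>I. \<Sum>j\<in>I. expectation (\<lambda>\<omega>. D i \<omega> * D j \<omega>))"
    using intDD by (simp add: Bochner_Integration.integral_sum)
  also have "\<dots> = (\<Sum>i\<in>I. expectation (\<lambda>\<omega>. D i \<omega> * D i \<omega>))"
  proof (rule sum.cong[OF refl])
    fix i assume i: "i \<in> I"
    have "(\<Sum>j\<in>I. expectation (\<lambda>\<omega>. D i \<omega> * D j \<omega>)) = expectation (\<lambda>\<omega>. D i \<omega> * D i \<omega>) + (\<Sum>j\<in>I-{i}. expectation (\<lambda>\<omega>. D i \<omega> * D j \<omega>))"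
      using fin i by (simp add: sum.remove)
    also have "(\<Sum>j\<in>I-{i}. expectation (\<lambda>\<omega>. D i \<omega> * D j \<omega>)) = 0"
    proof (rule sum.neutral, rule ballI)
      fix j assume j: "j \<in> I - {i}"
      show "expectation (\<lambda>\<omega>. D i \<omega> * D j \<omega>) = 0"
        using indep_var_lebesgue_integral[OF ind[OF i _] intD[OF i] intD] j zero by auto
    qed
    finally show "(\<Sum>j\<in>I. expectation (\<lambda>\<omega>. D i \<omega> * D j \<omega>)) = expectation (\<lambda>\<omega>. D i \<omega> * D i \<omega>)" by simp
  qed
  finally show ?thesis by (simp add: power2_eq_square)
qed

lemma indep_pair_compose:
  fixes X :: "'i \<Rightarrow> 'a \<Rightarrow> 'b"
  assumes indep: "indep_vars N X UNIV" and ij: "i \<noteq> j"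
    and f: "f \<in> measurable (N i) borel" and g: "g \<in> measurable (N j) borel"
  shows "indep_var borel (\<lambda>\<omega>. f (X i \<omega>)) borel (\<lambda>\<omega>. g (X j \<omega>))"
proof -
  have "indep_var borel ((\<lambda>h. f (h i)) \<circ> (\<lambda>\<omega>. restrict (\<lambda>k. X k \<omega>) {i})) borel ((\<lambda>h. g (h j)) \<circ> (\<lambda>\<omega>. restrict (\<lambda>k. X k \<omega>) {j}))"
    using ij f g by (intro indep_var_compose[OF indep_var_restrict[OF indep]]) auto
  then show ?thesis by (simp add: comp_def)
qed

end


context prob_space begin

lemma slln_nonneg:
  fixes X :: "nat \<Rightarrow> 'a \<Rightarrow> real"
  assumes indep: "indep_vars (\<lambda>_. borel) X UNIV"
    and ident: "\<And>i. distr M borel (X i) = distr M borel (X 0)"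
    and int0: "integrable M (X 0)"
    and nonneg: "\<And>i \<omega>. 0 \<le> X i \<omega>"
  shows "AE \<omega> in M. (\<lambda>n. (\<Sum>i<n. X i \<omega>) / real n) \<longlonglongrightarrow> expectation (X 0)"
proof -
  have rv[measurable]: "X i \<in> borel_measurable M" for i
    using indep unfolding indep_vars_def by auto
  define \<mu> where "\<mu> = expectation (X 0)"
  have tr_int: "(\<integral>\<omega>. f (X i \<omega>) \<partial>M) = (\<integral>\<omega>. f (X 0 \<omega>) \<partial>M)" if [measurable]: "f \<in> borel_measurable borel" for i and f :: "real \<Rightarrow> real"
  proof -
    have "(\<integral>\<omega>. f (X i \<omega>) \<partial>M) = integral\<^sup>L (distr M borel (X i)) f" by (simp add: integral_distr)
    also have "\<dots> = integral\<^sup>L (distr M borel (X 0)) f" by (simp add: ident[of i])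
    also have "\<dots> = (\<integral>\<omega>. f (X 0 \<omega>) \<partial>M)" by (simp add: integral_distr)
    finally show ?thesis .
  qed
  have tr_prob: "prob (X i -` A \<inter> space M) = prob (X 0 -` A \<inter> space M)" if "A \<in> sets borel" for i A
  proof -
    have "prob (X i -` A \<inter> space M) = measure (distr M borel (X i)) A" using that by (simp add: measure_distr)
    also have "\<dots> = measure (distr M borel (X 0)) A" by (simp add: ident[of i])
    also have "\<dots> = prob (X 0 -` A \<inter> space M)" using that by (simp add: measure_distr)
    finally show ?thesis .
  qed
  have \<mu>0: "0 \<le> \<mu>" unfolding \<mu>_def using nonneg by (simp add: integral_nonneg_AE)

  define g where "g k x = (if x \<le> real (Suc k) then x else 0)" for k and x :: real
  have g_meas[measurable]: "g k \<in> borel_measurable borel" for k unfolding g_def by measurable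
  define Y where "Y k \<omega> = g k (X k \<omega>)" for k \<omega>
  have Y_meas[measurable]: "Y k \<in> borel_measurable M" for k unfolding Y_def by measurable
  have Y_nonneg: "0 \<le> Y k \<omega>" for k \<omega> unfolding Y_def g_def using nonneg by auto
  have Y_bnd: "Y k \<omega> \<le> real (Suc k)" for k \<omega> unfolding Y_def g_def by auto
  define m where "m k = expectation (Y k)" for k
  have m_eq: "m k = (\<integral>\<omega>. g k (X 0 \<omega>) \<partial>M)" for k unfolding m_def Y_def by (rule tr_int) simp

  have stepA: "AE \<omega> in M. eventually (\<lambda>n. Y n \<omega> = X n \<omega>) sequentially"
  proof -
    define A where "A n = X n -` {real (Suc n)<..} \<inter> space M" for n
    define B where "B n = X 0 -` {real (Suc n)<..} \<inter> space M" for n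
    have A_sets[measurable]: "A n \<in> sets M" for n unfolding A_def by measurable
    have B_sets[measurable]: "B n \<in> sets M" for n unfolding B_def by measurable
    have pAB: "prob (A n) = prob (B n)" for n unfolding A_def B_def by (rule tr_prob) simp
    have bound: "(\<Sum>n<N. prob (A n)) \<le> \<mu>" for N
    proof -
      have "(\<Sum>n<N. prob (A n)) = (\<Sum>n<N. expectation (indicator (B n)))"
        using pAB by (simp add: Int_absorb2)
      also have "\<dots> = expectation (\<lambda>\<omega>. \<Sum>n<N. indicator (B n) \<omega>)"
        by (rule Bochner_Integration.integral_sum[symmetric]) (auto intro!: integrable_indicator simp: emeasure_eq_measure)
      also have "\<dots> \<le> expectation (X 0)"
      proof (rule integral_mono)
        show "integrable M (\<lambda>\<omega>. \<Sum>n<N. indicator (B n) \<omega> :: real)"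
          by (intro Bochner_Integration.integrable_sum integrable_indicator) (auto simp: emeasure_eq_measure)
        show "integrable M (X 0)" by (rule int0)
        fix \<omega> assume \<omega>: "\<omega> \<in> space M"
        have "(\<Sum>n<N. indicator (B n) \<omega> :: real) = (\<Sum>n<N. (if real (Suc n) < X 0 \<omega> then 1 else 0))"
          using \<omega> by (intro sum.cong) (auto simp: B_def indicator_def)
        also have "\<dots> \<le> min (real N) (X 0 \<omega>)" by (rule count_le[OF nonneg])
        finally show "(\<Sum>n<N. indicator (B n) \<omega> :: real) \<le> X 0 \<omega>" by simp
      qed
      finally show ?thesis unfolding \<mu>_def .
    qed
    have "summable (\<lambda>n. prob (A n))"
      by (rule summableI_nonneg_bounded[OF _ bound]) simp
    from borel_cantelli_AE1[OF A_sets _ this]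
    have "AE \<omega> in M. eventually (\<lambda>n. \<omega> \<in> space M - A n) sequentially"
      by (simp add: emeasure_eq_measure)
    then show ?thesis
    proof (rule eventually_mono)
      fix \<omega> assume "eventually (\<lambda>n. \<omega> \<in> space M - A n) sequentially"
      then show "eventually (\<lambda>n. Y n \<omega> = X n \<omega>) sequentially"
        by (rule eventually_mono) (auto simp: A_def Y_def g_def)
    qed
  qed

  have stepB: "m \<longlonglongrightarrow> \<mu>"
    unfolding m_eq \<mu>_def
  proof (rule integral_dominated_convergence[where w="X 0"])
    show "integrable M (X 0)" by (rule int0)
    show "AE \<omega> in M. norm (g i (X 0 \<omega>)) \<le> X 0 \<omega>" for i
      using nonneg by (auto simp: g_def)
    show "AE \<omega> in M. (\<lambda>i. g i (X 0 \<omega>)) \<longlonglongrightarrow> X 0 \<omega>"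
    proof (rule AE_I2)
      fix \<omega>
      obtain N where "X 0 \<omega> \<le> real N" using real_arch_simple by blast
      hence "eventually (\<lambda>i. g i (X 0 \<omega>) = X 0 \<omega>) sequentially"
        unfolding eventually_sequentially g_def by (intro exI[of _ N]) auto
      thus "(\<lambda>i. g i (X 0 \<omega>)) \<longlonglongrightarrow> X 0 \<omega>" by (rule tendsto_eventually)
    qed
  qed measurable

  have stepC: "AE \<omega> in M. eventually (\<lambda>n. \<bar>(\<Sum>k<kk a n. Y k \<omega>) - (\<Sum>k<kk a n. m k)\<bar> < \<epsilon> * real (kk a n)) sequentially"
    if a: "a > 1" and \<epsilon>: "\<epsilon> > 0" for a \<epsilon>
  proof -
    have Yint: "integrable M (Y k)" for k
      using Y_bnd Y_nonneg by (intro integrable_const_bound[where B="real (Suc k)"]) auto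
    have Y2int: "integrable M (\<lambda>\<omega>. (Y k \<omega>)^2)" for k
      using Y_bnd Y_nonneg by (intro integrable_const_bound[where B="(real (Suc k))^2"])
        (auto intro!: power_mono)
    have m_nn: "0 \<le> m k" for k unfolding m_def using Y_nonneg by (simp add: integral_nonneg_AE)
    define D where "D k \<omega> = Y k \<omega> - m k" for k \<omega>
    have D_meas[measurable]: "D k \<in> borel_measurable M" for k unfolding D_def by measurable
    have secmom: "expectation (\<lambda>\<omega>. (D k \<omega>)^2) \<le> (\<integral>\<omega>. (g k (X 0 \<omega>))^2 \<partial>M)" for k
    proof -
      have "(\<lambda>\<omega>. (D k \<omega>)^2) = (\<lambda>\<omega>. (Y k \<omega>)^2 - 2 * m k * Y k \<omega> + (m k)^2)"
        by (auto simp: D_def power2_eq_square algebra_simps)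
      hence "expectation (\<lambda>\<omega>. (D k \<omega>)^2) = expectation (\<lambda>\<omega>. (Y k \<omega>)^2) - 2 * m k * m k + (m k)^2"
        using Yint Y2int by (simp add: m_def prob_space)
      also have "\<dots> \<le> expectation (\<lambda>\<omega>. (Y k \<omega>)^2)" by (simp add: power2_eq_square)
      also have "\<dots> = (\<integral>\<omega>. (g k (X 0 \<omega>))^2 \<partial>M)" unfolding Y_def by (rule tr_int) simp
      finally show ?thesis .
    qed
    define K where "K n = kk a n" for n
    have Kpos: "real (K n) > 0" for n using kk_ge1[OF a, of n] unfolding K_def by simp
    define Bn where "Bn n = {\<omega>\<in>space M. \<epsilon> * real (K n) \<le> \<bar>(\<Sum>k<K n. Y k \<omega>) - (\<Sum>k<K n. m k)\<bar>}" for n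
    have Bn_sets[measurable]: "Bn n \<in> sets M" for n unfolding Bn_def by measurable
    have pB: "prob (Bn n) \<le> (\<Sum>k<K n. (\<integral>\<omega>. (g k (X 0 \<omega>))^2 \<partial>M)) / (\<epsilon> * real (K n))^2" for n
    proof -
      have c: "(\<epsilon> * real (K n))^2 > 0" using \<epsilon> Kpos[of n] by simp
      have eqs: "(\<Sum>k<K n. Y k \<omega>) - (\<Sum>k<K n. m k) = (\<Sum>k<K n. D k \<omega>)" for \<omega>
        by (simp add: D_def sum_subtractf)
      have "Bn n = {\<omega>\<in>space M. (\<epsilon> * real (K n))^2 \<le> (\<Sum>k<K n. D k \<omega>)^2}"
        unfolding Bn_def eqs using \<epsilon> Kpos[of n]
        by (auto simp: abs_le_square_iff[symmetric])
      moreover have int_sq: "integrable M (\<lambda>\<omega>. (\<Sum>k<K n. D k \<omega>)^2)"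
      proof (rule integrable_const_bound[where B="(\<Sum>k<K n. real (Suc k) + m k)^2"])
        show "AE \<omega> in M. norm ((\<Sum>k<K n. D k \<omega>)^2) \<le> (\<Sum>k<K n. real (Suc k) + m k)^2"
        proof (rule AE_I2)
          fix \<omega>
          have "\<bar>\<Sum>k<K n. D k \<omega>\<bar> \<le> (\<Sum>k<K n. \<bar>D k \<omega>\<bar>)" by (rule sum_abs)
          also have "\<dots> \<le> (\<Sum>k<K n. real (Suc k) + m k)"
          proof (rule sum_mono)
            fix k show "\<bar>D k \<omega>\<bar> \<le> real (Suc k) + m k"
              using Y_bnd[of k \<omega>] Y_nonneg[of k \<omega>] m_nn[of k] by (auto simp: D_def)
          qed
          finally have "\<bar>\<Sum>k<K n. D k \<omega>\<bar> \<le> (\<Sum>k<K n. real (Suc k) + m k)" .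
          hence "\<bar>\<Sum>k<K n. D k \<omega>\<bar>^2 \<le> (\<Sum>k<K n. real (Suc k) + m k)^2"
            by (intro power_mono) auto
          thus "norm ((\<Sum>k<K n. D k \<omega>)^2) \<le> (\<Sum>k<K n. real (Suc k) + m k)^2" by simp
        qed
      qed measurable
      ultimately have "prob (Bn n) \<le> expectation (\<lambda>\<omega>. (\<Sum>k<K n. D k \<omega>)^2) / (\<epsilon> * real (K n))^2"
        using integral_Markov_inequality_measure[OF int_sq sets.top _ c] by simp
      also have "expectation (\<lambda>\<omega>. (\<Sum>k<K n. D k \<omega>)^2) = (\<Sum>k<K n. expectation (\<lambda>\<omega>. (D k \<omega>)^2))"
      proof (rule sum_sq_indep[where B="\<lambda>k. real (Suc k) + m k"])
        show "\<bar>D k \<omega>\<bar> \<le> real (Suc k) + m k" for k \<omega>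
          using Y_bnd[of k \<omega>] Y_nonneg[of k \<omega>] m_nn[of k] by (auto simp: D_def)
        show "expectation (D k) = 0" for k
          unfolding D_def using Yint by (simp add: m_def prob_space)
        show "indep_var borel (D i) borel (D j)" if "i \<noteq> j" for i j
          unfolding D_def Y_def using indep_pair_compose[OF indep that, of "\<lambda>x. g i x - m i" "\<lambda>x. g j x - m j"]
          by simp
      qed auto
      also have "(\<Sum>k<K n. expectation (\<lambda>\<omega>. (D k \<omega>)^2)) / (\<epsilon> * real (K n))^2 \<le> (\<Sum>k<K n. (\<integral>\<omega>. (g k (X 0 \<omega>))^2 \<partial>M)) / (\<epsilon> * real (K n))^2"
        using c by (intro divide_right_mono sum_mono secmom) auto
      finally show ?thesis .
    qed
    have bound: "(\<Sum>n<N. prob (Bn n)) \<le> 2 * a / (a - 1) * \<mu> / \<epsilon>^2" for N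
    proof -
      have gi: "integrable M (\<lambda>\<omega>. (if X 0 \<omega> \<le> real (Suc k) then (X 0 \<omega>)^2 / (real (K n))^2 else 0))" for k n
        using nonneg by (intro integrable_const_bound[where B="(real (Suc k))^2 / (real (K n))^2"])
          (auto intro!: divide_right_mono power_mono)
      have "(\<Sum>n<N. prob (Bn n)) \<le> (\<Sum>n<N. (\<Sum>k<K n. (\<integral>\<omega>. (g k (X 0 \<omega>))^2 \<partial>M)) / (\<epsilon> * real (K n))^2)"
        by (intro sum_mono pB)
      also have "\<dots> = (\<Sum>n<N. \<Sum>k<K n. (\<integral>\<omega>. (if X 0 \<omega> \<le> real (Suc k) then (X 0 \<omega>)^2 / (real (K n))^2 else 0) \<partial>M)) / \<epsilon>^2"
      proof -
        have t: "(\<integral>\<omega>. (if X 0 \<omega> \<le> real (Suc k) then (X 0 \<omega>)^2 / (real (K n))^2 else 0) \<partial>M) = (\<integral>\<omega>. (g k (X 0 \<omega>))^2 \<partial>M) / (real (K n))^2" for k n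
        proof -
          have "(\<integral>\<omega>. (g k (X 0 \<omega>))^2 \<partial>M) / (real (K n))^2 = (\<integral>\<omega>. (g k (X 0 \<omega>))^2 / (real (K n))^2 \<partial>M)"
            by (rule integral_divide_zero[symmetric])
          also have "\<dots> = (\<integral>\<omega>. (if X 0 \<omega> \<le> real (Suc k) then (X 0 \<omega>)^2 / (real (K n))^2 else 0) \<partial>M)"
            by (rule Bochner_Integration.integral_cong) (auto simp: g_def)
          finally show ?thesis by simp
        qed
        show ?thesis unfolding t
          by (simp add: sum_divide_distrib power_mult_distrib mult.commute)
      qed
      also have "\<dots> = (\<integral>\<omega>. (\<Sum>n<N. \<Sum>k<K n. (if X 0 \<omega> \<le> real (Suc k) then (X 0 \<omega>)^2 / (real (K n))^2 else 0)) \<partial>M) / \<epsilon>^2"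
        using gi by (simp add: Bochner_Integration.integral_sum Bochner_Integration.integrable_sum)
      also have "\<dots> \<le> (\<integral>\<omega>. 2 * a / (a - 1) * X 0 \<omega> \<partial>M) / \<epsilon>^2"
      proof (intro divide_right_mono integral_mono)
        show "integrable M (\<lambda>\<omega>. (\<Sum>n<N. \<Sum>k<K n. (if X 0 \<omega> \<le> real (Suc k) then (X 0 \<omega>)^2 / (real (K n))^2 else 0)))"
          using gi by (simp add: Bochner_Integration.integrable_sum)
        show "integrable M (\<lambda>\<omega>. 2 * a / (a - 1) * X 0 \<omega>)" using int0 by simp
        show "(\<Sum>n<N. \<Sum>k<K n. (if X 0 \<omega> \<le> real (Suc k) then (X 0 \<omega>)^2 / (real (K n))^2 else 0)) \<le> 2 * a / (a - 1) * X 0 \<omega>" for \<omega>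
          unfolding K_def by (rule trunc_var_bound[OF a nonneg])
      qed simp
      also have "\<dots> = 2 * a / (a - 1) * \<mu> / \<epsilon>^2" by (simp add: \<mu>_def)
      finally show ?thesis .
    qed
    have "summable (\<lambda>n. prob (Bn n))"
      by (rule summableI_nonneg_bounded[OF _ bound]) simp
    from borel_cantelli_AE1[OF Bn_sets _ this]
    have "AE \<omega> in M. eventually (\<lambda>n. \<omega> \<in> space M - Bn n) sequentially"
      by (simp add: emeasure_eq_measure)
    then show ?thesis
    proof (rule eventually_mono)
      fix \<omega> assume "eventually (\<lambda>n. \<omega> \<in> space M - Bn n) sequentially"
      then show "eventually (\<lambda>n. \<bar>(\<Sum>k<kk a n. Y k \<omega>) - (\<Sum>k<kk a n. m k)\<bar> < \<epsilon> * real (kk a n)) sequentially"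
        by (rule eventually_mono) (auto simp: Bn_def K_def)
    qed
  qed

  have "AE \<omega> in M. \<forall>j i. eventually (\<lambda>n. \<bar>(\<Sum>k<kk (1 + 1 / real (Suc j)) n. Y k \<omega>) - (\<Sum>k<kk (1 + 1 / real (Suc j)) n. m k)\<bar> < (1 / real (Suc i)) * real (kk (1 + 1 / real (Suc j)) n)) sequentially"
    by (subst AE_all_countable, intro allI, subst AE_all_countable, intro allI stepC) auto
  then show ?thesis using stepA
  proof eventually_elim
    case (elim \<omega>)
    define T where "T n = (\<Sum>i<n. X i \<omega>)" for n
    define S where "S n = (\<Sum>i<n. Y i \<omega>)" for n
    define ES where "ES n = (\<Sum>i<n. m i)" for n
    have Tmono: "T p \<le> T q" if "p \<le> q" for p q
      unfolding T_def using that nonneg by (intro sum_mono2) auto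
    have Tnn: "0 \<le> T n" for n unfolding T_def using nonneg by (intro sum_nonneg) auto
    from elim(2) obtain N0 where N0: "\<And>n. n \<ge> N0 \<Longrightarrow> Y n \<omega> = X n \<omega>" by (auto simp: eventually_sequentially)
    have TS: "(\<lambda>K. (T K - S K) / real K) \<longlonglongrightarrow> 0"
    proof (rule Lim_transform_eventually[OF lim_const_over_n[of "\<Sum>k<N0. (X k \<omega> - Y k \<omega>)"]])
      show "eventually (\<lambda>K. (\<Sum>k<N0. (X k \<omega> - Y k \<omega>)) / real K = (T K - S K) / real K) sequentially"
        unfolding eventually_sequentially
      proof (intro exI allI impI)
        fix K assume K: "N0 \<le> K"
        have "T K - S K = (\<Sum>k<K. (X k \<omega> - Y k \<omega>))" unfolding T_def S_def by (simp add: sum_subtractf)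
        also have "\<dots> = (\<Sum>k<N0. (X k \<omega> - Y k \<omega>)) + (\<Sum>k\<in>{N0..<K}. (X k \<omega> - Y k \<omega>))"
          using K by (metis atLeast0LessThan sum.atLeastLessThan_concat zero_le)
        also have "(\<Sum>k\<in>{N0..<K}. (X k \<omega> - Y k \<omega>)) = 0" using N0 by (intro sum.neutral) auto
        finally show "(\<Sum>k<N0. (X k \<omega> - Y k \<omega>)) / real K = (T K - S K) / real K" by simp
      qed
    qed
    have EScon: "(\<lambda>K. ES K / real K) \<longlonglongrightarrow> \<mu>" unfolding ES_def by (rule cesaro_real[OF stepB])
    show ?case unfolding T_def[symmetric] \<mu>_def[symmetric]
    proof (rule interp[OF Tmono Tnn])
      fix j
      define a where "a = 1 + 1 / real (Suc j)"
      have a: "a > 1" unfolding a_def by simp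
      have comp: "(\<lambda>n. f (kk a n)) \<longlonglongrightarrow> L" if "f \<longlonglongrightarrow> L" for f :: "nat \<Rightarrow> real" and L
        using filterlim_compose[OF that kk_at_top[OF a]] .
      have SES: "(\<lambda>n. (S (kk a n) - ES (kk a n)) / real (kk a n)) \<longlonglongrightarrow> 0"
      proof (rule LIMSEQ_I)
        fix r :: real assume r: "0 < r"
        obtain i where i: "inverse (real (Suc i)) < r" using reals_Archimedean[OF r] by blast
        from elim(1)[rule_format, of j i] obtain N1 where
          N1: "\<And>n. n \<ge> N1 \<Longrightarrow> \<bar>S (kk a n) - ES (kk a n)\<bar> < (1 / real (Suc i)) * real (kk a n)"
          unfolding S_def ES_def a_def eventually_sequentially by blast
        show "\<exists>no. \<forall>n\<ge>no. norm ((S (kk a n) - ES (kk a n)) / real (kk a n) - 0) < r"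
        proof (intro exI allI impI)
          fix n assume "N1 \<le> n"
          have kp: "real (kk a n) > 0" using kk_ge1[OF a, of n] by simp
          have "\<bar>S (kk a n) - ES (kk a n)\<bar> / real (kk a n) < 1 / real (Suc i)"
            using N1[OF \<open>N1 \<le> n\<close>] kp by (simp add: divide_less_eq)
          thus "norm ((S (kk a n) - ES (kk a n)) / real (kk a n) - 0) < r"
            using i by (simp add: abs_divide inverse_eq_divide)
        qed
      qed
      have "(\<lambda>n. (T (kk a n) - S (kk a n)) / real (kk a n) + (S (kk a n) - ES (kk a n)) / real (kk a n) + ES (kk a n) / real (kk a n)) \<longlonglongrightarrow> 0 + 0 + \<mu>"
        by (intro tendsto_add comp[OF TS] SES comp[OF EScon])
      moreover have "(\<lambda>n. (T (kk a n) - S (kk a n)) / real (kk a n) + (S (kk a n) - ES (kk a n)) / real (kk a n) + ES (kk a n) / real (kk a n)) = (\<lambda>n. T (kk a n) / real (kk a n))"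
        by (simp add: diff_divide_distrib)
      ultimately show "(\<lambda>n. T (kk (1 + 1 / real (Suc j)) n) / real (kk (1 + 1 / real (Suc j)) n)) \<longlonglongrightarrow> \<mu>"
        unfolding a_def by simp
    qed
  qed
qed

end


context prob_space begin

lemma slln:
  fixes X :: "nat \<Rightarrow> 'a \<Rightarrow> real"
  assumes indep: "indep_vars (\<lambda>_. borel) X UNIV"
    and ident: "\<And>i. distr M borel (X i) = distr M borel (X 0)"
    and int0: "integrable M (X 0)"
  shows "AE \<omega> in M. (\<lambda>n. (\<Sum>i<n. X i \<omega>) / real n) \<longlonglongrightarrow> expectation (X 0)"
proof -
  have rv[measurable]: "X i \<in> borel_measurable M" for i
    using indep unfolding indep_vars_def by auto
  have gen: "AE \<omega> in M. (\<lambda>n. (\<Sum>i<n. f (X i \<omega>)) / real n) \<longlonglongrightarrow> expectation (\<lambda>\<omega>. f (X 0 \<omega>))"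
    if f[measurable]: "f \<in> borel_measurable borel" and fnn: "\<And>x. 0 \<le> f x" and fint: "integrable M (\<lambda>\<omega>. f (X 0 \<omega>))" for f
  proof (rule slln_nonneg)
    show "indep_vars (\<lambda>_. borel) (\<lambda>i \<omega>. f (X i \<omega>)) UNIV"
      by (rule indep_vars_compose2[OF indep]) simp
    show "distr M borel (\<lambda>\<omega>. f (X i \<omega>)) = distr M borel (\<lambda>\<omega>. f (X 0 \<omega>))" for i
    proof -
      have "distr M borel (\<lambda>\<omega>. f (X i \<omega>)) = distr (distr M borel (X i)) borel f"
        by (simp add: distr_distr comp_def)
      also have "\<dots> = distr (distr M borel (X 0)) borel f" by (simp add: ident[of i])
      also have "\<dots> = distr M borel (\<lambda>\<omega>. f (X 0 \<omega>))" by (simp add: distr_distr comp_def)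
      finally show ?thesis .
    qed
  qed (use fnn fint in auto)
  have intP: "integrable M (\<lambda>\<omega>. max 0 (X 0 \<omega>))" using int0 by (intro integrable_max) auto
  have intN: "integrable M (\<lambda>\<omega>. max 0 (- X 0 \<omega>))" using int0 by (intro integrable_max) auto
  have P: "AE \<omega> in M. (\<lambda>n. (\<Sum>i<n. max 0 (X i \<omega>)) / real n) \<longlonglongrightarrow> expectation (\<lambda>\<omega>. max 0 (X 0 \<omega>))"
    by (rule gen[of "\<lambda>x. max 0 x"]) (use intP in auto)
  have N: "AE \<omega> in M. (\<lambda>n. (\<Sum>i<n. max 0 (- X i \<omega>)) / real n) \<longlonglongrightarrow> expectation (\<lambda>\<omega>. max 0 (- X 0 \<omega>))"
    by (rule gen[of "\<lambda>x. max 0 (- x)"]) (use intN in auto)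
  have eqE: "expectation (X 0) = expectation (\<lambda>\<omega>. max 0 (X 0 \<omega>)) - expectation (\<lambda>\<omega>. max 0 (- X 0 \<omega>))"
  proof -
    have "X 0 = (\<lambda>\<omega>. max 0 (X 0 \<omega>) - max 0 (- X 0 \<omega>))" by (auto simp: fun_eq_iff max_def)
    hence "expectation (X 0) = expectation (\<lambda>\<omega>. max 0 (X 0 \<omega>) - max 0 (- X 0 \<omega>))" by simp
    also have "\<dots> = expectation (\<lambda>\<omega>. max 0 (X 0 \<omega>)) - expectation (\<lambda>\<omega>. max 0 (- X 0 \<omega>))"
      using intP intN by simp
    finally show ?thesis .
  qed
  from P N show ?thesis
  proof eventually_elim
    case (elim \<omega>)
    have eq: "(\<Sum>i<n. X i \<omega>) / real n = (\<Sum>i<n. max 0 (X i \<omega>)) / real n - (\<Sum>i<n. max 0 (- X i \<omega>)) / real n" for n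
    proof -
      have "(\<Sum>i<n. X i \<omega>) = (\<Sum>i<n. max 0 (X i \<omega>) - max 0 (- X i \<omega>))" by (intro sum.cong) (auto simp: max_def)
      thus ?thesis by (simp add: sum_subtractf diff_divide_distrib)
    qed
    show ?case unfolding eq eqE by (intro tendsto_diff elim)
  qed
qed

end


lemma gauss_meas[measurable]: "gauss_kernel t \<in> borel_measurable borel"
  unfolding gauss_kernel_def[abs_def] by measurable

lemma gauss_nonneg: "0 \<le> gauss_kernel t v"
  unfolding gauss_kernel_def by simp

lemma gauss_pos: "t > 0 \<Longrightarrow> 0 < gauss_kernel t v"
  unfolding gauss_kernel_def by simp

lemma gauss_sym: "gauss_kernel t (y - x) = gauss_kernel t (x - y)"
  unfolding gauss_kernel_def by (simp add: norm_minus_commute)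

lemma gauss_scale:
  fixes u :: "'a::euclidean_space"
  assumes t: "t > 0"
  shows "(sqrt t) ^ DIM('a) * gauss_kernel t (sqrt t *\<^sub>R u) = gauss_kernel 1 u"
proof -
  have n: "(norm (sqrt t *\<^sub>R u))\<^sup>2 = t * (norm u)\<^sup>2" using t by (simp add: power_mult_distrib)
  have e: "exp (- (t * (norm u)\<^sup>2) / (2 * t)) = exp (- (norm u)\<^sup>2 / 2)" using t by simp
  have p1: "(2 * pi * t) powr (- real DIM('a) / 2) = (2 * pi) powr (- real DIM('a) / 2) * t powr (- real DIM('a) / 2)"
    using t by (simp add: powr_mult)
  have p2: "(sqrt t) ^ DIM('a) = t powr (real DIM('a) / 2)"
    using t by (simp add: sqrt_def root_powr_inverse powr_realpow[symmetric] powr_powr)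
  have p3: "t powr (real DIM('a) / 2) * t powr (- real DIM('a) / 2) = 1"
    using t by (simp add: powr_add[symmetric])
  show ?thesis
    unfolding gauss_kernel_def n e p1 p2 using p3 by (simp add: algebra_simps)
qed

lemma gauss_cv_nn:
  fixes f :: "'a::euclidean_space \<Rightarrow> ennreal" and x :: 'a
  assumes t: "t > 0" and f[measurable]: "f \<in> borel_measurable borel"
  shows "(\<integral>\<^sup>+u. ennreal (gauss_kernel 1 u) * f (x + sqrt t *\<^sub>R u) \<partial>lborel)
       = (\<integral>\<^sup>+y. ennreal (gauss_kernel t (y - x)) * f y \<partial>lborel)"
proof -
  have c: "sqrt t \<noteq> 0" using t by simp
  have eq: "lborel = density (distr lborel borel (\<lambda>u. x + sqrt t *\<^sub>R u)) (\<lambda>_. \<bar>sqrt t\<bar> ^ DIM('a))"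
    by (rule lborel_affine[OF c])
  have "(\<integral>\<^sup>+y. ennreal (gauss_kernel t (y - x)) * f y \<partial>lborel)
      = (\<integral>\<^sup>+y. ennreal (gauss_kernel t (y - x)) * f y \<partial>(density (distr lborel borel (\<lambda>u. x + sqrt t *\<^sub>R u)) (\<lambda>_. \<bar>sqrt t\<bar> ^ DIM('a))))"
    using eq by simp
  also have "\<dots> = (\<integral>\<^sup>+u. \<bar>sqrt t\<bar> ^ DIM('a) * (ennreal (gauss_kernel t (sqrt t *\<^sub>R u)) * f (x + sqrt t *\<^sub>R u)) \<partial>lborel)"
    by (simp add: nn_integral_density nn_integral_distr)
  also have "\<dots> = (\<integral>\<^sup>+u. ennreal (gauss_kernel 1 u) * f (x + sqrt t *\<^sub>R u) \<partial>lborel)"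
  proof (rule nn_integral_cong)
    fix u :: 'a
    have "\<bar>sqrt t\<bar> ^ DIM('a) * ennreal (gauss_kernel t (sqrt t *\<^sub>R u)) = ennreal ((sqrt t) ^ DIM('a) * gauss_kernel t (sqrt t *\<^sub>R u))"
      using t by (simp add: ennreal_mult[symmetric] gauss_nonneg)
    also have "\<dots> = ennreal (gauss_kernel 1 u)" using gauss_scale[OF t, of u] by simp
    finally show "\<bar>sqrt t\<bar> ^ DIM('a) * (ennreal (gauss_kernel t (sqrt t *\<^sub>R u)) * f (x + sqrt t *\<^sub>R u)) = ennreal (gauss_kernel 1 u) * f (x + sqrt t *\<^sub>R u)"
      by (metis mult.assoc)
  qed
  finally show ?thesis ..
qed

lemma gauss_cv:
  fixes f :: "'a::euclidean_space \<Rightarrow> real" and x :: 'a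
  assumes t: "t > 0" and f[measurable]: "f \<in> borel_measurable borel"
  shows "(\<integral>u. gauss_kernel 1 u * f (x + sqrt t *\<^sub>R u) \<partial>lborel)
       = (\<integral>y. gauss_kernel t (y - x) * f y \<partial>lborel)"
proof -
  have c: "sqrt t \<noteq> 0" using t by simp
  have eq: "lborel = density (distr lborel borel (\<lambda>u. x + sqrt t *\<^sub>R u)) (\<lambda>_. \<bar>sqrt t\<bar> ^ DIM('a))"
    by (rule lborel_affine[OF c])
  have "(\<integral>y. gauss_kernel t (y - x) * f y \<partial>lborel)
      = (\<integral>y. gauss_kernel t (y - x) * f y \<partial>(density (distr lborel borel (\<lambda>u. x + sqrt t *\<^sub>R u)) (\<lambda>_. \<bar>sqrt t\<bar> ^ DIM('a))))"
    using eq by simp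
  also have "\<dots> = (\<integral>u. (sqrt t) ^ DIM('a) * (gauss_kernel t (sqrt t *\<^sub>R u) * f (x + sqrt t *\<^sub>R u)) \<partial>lborel)"
    using t by (subst integral_real_density) (auto simp: integral_distr)
  also have "\<dots> = (\<integral>u. gauss_kernel 1 u * f (x + sqrt t *\<^sub>R u) \<partial>lborel)"
  proof -
    have "\<And>u::'a. sqrt t ^ DIM('a) * gauss_kernel t (sqrt t *\<^sub>R u) = gauss_kernel 1 u" by (rule gauss_scale[OF t])
    then show ?thesis by (simp add: mult.assoc[symmetric])
  qed
  finally show ?thesis ..
qed


lemma distr_lborel_borel: "distr M lborel f = distr M borel f"
  by (rule distr_cong) auto

locale ed_setup = prob_space P for P :: "'w measure" +
  fixes Z :: "idx \<Rightarrow> 'w \<Rightarrow> 'a::euclidean_space"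
    and p :: "'a \<Rightarrow> real" and E :: "'a \<Rightarrow> real" and t w :: real
  assumes p_meas: "p \<in> borel_measurable lborel"
    and p_nonneg: "\<And>x. 0 \<le> p x"
    and p_int: "(\<integral>\<^sup>+ x. ennreal (p x) \<partial>lborel) = 1"
    and E_meas: "E \<in> borel_measurable borel"
    and E_bdd: "\<exists>C. \<forall>x. exp (- E x) \<le> C"
    and E_integrable: "integrable lborel (\<lambda>x. p x * E x)"
    and UG_integrable: "integrable (lborel \<Otimes>\<^sub>M lborel)
          (\<lambda>(x, y). p x * gauss_kernel t (y - x) * U_gamma t E y)"
    and t_pos: "t > 0" and w_nonneg: "w \<ge> 0"
    and indep: "indep_vars (\<lambda>_. borel) Z UNIV"
    and dist_x: "\<And>i. distributed P lborel (Z (Xs i)) (\<lambda>x. ennreal (p x))"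
    and dist_xi: "\<And>i. distributed P lborel (Z (Xi i)) (\<lambda>x. ennreal (gauss_kernel 1 x))"
    and dist_xi': "\<And>i j. distributed P lborel (Z (Xi' i j)) (\<lambda>x. ennreal (gauss_kernel 1 x))"
begin

lemma Z_meas[measurable]: "Z k \<in> borel_measurable P"
  using indep unfolding indep_vars_def by auto

lemma p_meas'[measurable]: "p \<in> borel_measurable borel"
  using p_meas by simp

declare E_meas[measurable]

definition C where "C = (SOME C. \<forall>x. exp (- E x) \<le> C)"

lemma C_bound: "exp (- E x) \<le> C"
  using someI_ex[OF E_bdd] unfolding C_def by blast

lemma C_pos: "0 < C"
  using C_bound[of 0] by (metis exp_gt_zero order_less_le_trans)

definition s where "s = sqrt t"

lemma s_pos: "0 < s" using t_pos by (simp add: s_def)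

definition G where "G y = (\<integral>x. gauss_kernel t (y - x) * exp (- E x) \<partial>lborel)"

lemma U_G: "U_gamma t E y = - ln (G y)"
  unfolding U_gamma_def G_def ..

lemma G_meas[measurable]: "G \<in> borel_measurable borel"
  unfolding G_def by measurable

lemma U_meas[measurable]: "U_gamma t E \<in> borel_measurable borel"
  unfolding U_G[abs_def] by measurable

lemma G_alt: "G y = (\<integral>u. gauss_kernel 1 u * exp (- E (y + s *\<^sub>R u)) \<partial>lborel)"
proof -
  have "G y = (\<integral>x. gauss_kernel t (x - y) * exp (- E x) \<partial>lborel)"
    unfolding G_def by (simp add: gauss_sym)
  also have "\<dots> = (\<integral>u. gauss_kernel 1 u * exp (- E (y + s *\<^sub>R u)) \<partial>lborel)"
    unfolding s_def by (rule gauss_cv[OF t_pos, symmetric]) measurable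
  finally show ?thesis .
qed

lemma gauss1_nn: "(\<integral>\<^sup>+u. ennreal (gauss_kernel 1 u) \<partial>(lborel :: 'a measure)) = 1"
proof -
  have "distr P lborel (Z (Xi 0)) = density lborel (\<lambda>x. ennreal (gauss_kernel 1 x))"
    using dist_xi[of 0] by (simp add: distributed_distr_eq_density)
  moreover have "emeasure (distr P lborel (Z (Xi 0))) UNIV = 1"
    using emeasure_space_1 by (simp add: emeasure_distr)
  ultimately show ?thesis by (simp add: emeasure_density)
qed

lemma gauss1_int: "integrable lborel (gauss_kernel 1 :: 'a \<Rightarrow> real)"
  using gauss1_nn by (intro integrableI_nonneg) (auto simp: gauss_nonneg)

lemma gauss1_integral: "(\<integral>u. gauss_kernel 1 u \<partial>(lborel :: 'a measure)) = 1"
  using gauss1_nn by (subst integral_eq_nn_integral) (auto simp: gauss_nonneg)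

lemma gauss1_bounded_int:
  fixes f :: "'a \<Rightarrow> real"
  assumes [measurable]: "f \<in> borel_measurable borel" and b: "\<And>x. \<bar>f x\<bar> \<le> B"
  shows "integrable lborel (\<lambda>u. gauss_kernel 1 u * f u :: real)"
proof (rule Bochner_Integration.integrable_bound[where f="\<lambda>u. B * gauss_kernel 1 u"])
  show "integrable lborel (\<lambda>u::'a. B * gauss_kernel 1 u)" using gauss1_int by simp
  show "AE x in lborel. norm (gauss_kernel 1 x * f x) \<le> norm (B * gauss_kernel 1 (x::'a))"
  proof (rule AE_I2)
    fix x
    have "norm (gauss_kernel 1 x * f x) = gauss_kernel 1 x * \<bar>f x\<bar>" by (simp add: abs_mult gauss_nonneg)
    also have "\<dots> \<le> gauss_kernel 1 x * B" by (intro mult_left_mono b gauss_nonneg)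
    also have "\<dots> \<le> norm (B * gauss_kernel 1 x)" by (simp add: gauss_nonneg abs_mult mult.commute mult_right_mono)
    finally show "norm (gauss_kernel 1 x * f x) \<le> norm (B * gauss_kernel 1 x)" .
  qed
qed measurable

lemma h_int: "integrable lborel (\<lambda>u. gauss_kernel 1 u * exp (- E (y + s *\<^sub>R u)))"
  by (rule gauss1_bounded_int[where B=C]) (use C_bound in auto)

lemma G_le: "G y \<le> C"
proof -
  have "G y \<le> (\<integral>u. gauss_kernel 1 (u::'a) * C \<partial>lborel)"
    unfolding G_alt using h_int gauss1_int C_bound
    by (intro Bochner_Integration.integral_mono) (auto intro!: mult_left_mono gauss_nonneg)
  also have "\<dots> = C" using gauss1_integral by simp
  finally show ?thesis .
qed

lemma G_pos: "0 < G y"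
proof -
  have nn: "0 \<le> G y" unfolding G_alt by (intro integral_nonneg_AE AE_I2) (simp add: gauss_nonneg)
  have "G y \<noteq> 0"
  proof
    assume "G y = 0"
    hence "AE u in lborel. gauss_kernel 1 u * exp (- E (y + s *\<^sub>R u)) = 0"
      unfolding G_alt using h_int by (subst (asm) integral_nonneg_eq_0_iff_AE) (auto simp: gauss_nonneg)
    moreover have "gauss_kernel 1 u * exp (- E (y + s *\<^sub>R u)) \<noteq> 0" for u
      using gauss_pos[of 1 u] by simp
    ultimately have "AE u in (lborel :: 'a measure). False" by simp
    hence "ae_filter (lborel :: 'a measure) = bot" using trivial_limit_def by blast
    thus False by (simp add: ae_filter_eq_bot_iff)
  qed
  with nn show ?thesis by simp
qed

end


context ed_setup begin

definition Linf :: "nat \<Rightarrow> 'w \<Rightarrow> real" where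
  "Linf i \<omega> = E (Z (Xs i) \<omega>) - U_gamma t E (Z (Xs i) \<omega> + s *\<^sub>R Z (Xi i) \<omega>)"

definition phi :: "'a \<times> 'a \<Rightarrow> real" where
  "phi z = E (fst z) - U_gamma t E (fst z + s *\<^sub>R snd z)"

lemma phi_meas[measurable]: "phi \<in> borel_measurable (borel \<Otimes>\<^sub>M borel)"
  unfolding phi_def by measurable

lemma Linf_meas[measurable]: "Linf i \<in> borel_measurable P"
  unfolding Linf_def by measurable

lemma Linf_indep: "indep_vars (\<lambda>_. borel) Linf UNIV"
proof -
  define K where "K i = {Xs i, Xi i}" for i
  have dj: "disjoint_family_on K UNIV" unfolding K_def disjoint_family_on_def by auto
  have ind: "indep_vars (\<lambda>i. Pi\<^sub>M (K i) (\<lambda>_. borel)) (\<lambda>i \<omega>. restrict (\<lambda>k. Z k \<omega>) (K i)) UNIV"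
    by (rule indep_vars_restrict[OF indep _ dj]) auto
  define F where "F i f = E (f (Xs i)) - U_gamma t E (f (Xs i) + s *\<^sub>R f (Xi i))" for i and f :: "idx \<Rightarrow> 'a"
  have Fm: "F i \<in> borel_measurable (Pi\<^sub>M (K i) (\<lambda>_. borel))" for i
    unfolding F_def K_def by measurable
  have "indep_vars (\<lambda>_. borel) (\<lambda>i \<omega>. F i (restrict (\<lambda>k. Z k \<omega>) (K i))) UNIV"
    by (rule indep_vars_compose2[OF ind Fm])
  moreover have "(\<lambda>i \<omega>. F i (restrict (\<lambda>k. Z k \<omega>) (K i))) = Linf"
    by (auto simp: fun_eq_iff F_def K_def Linf_def)
  ultimately show ?thesis by simp
qed

definition Q :: "('a \<times> 'a) measure" where
  "Q = density lborel (\<lambda>x. ennreal (p x)) \<Otimes>\<^sub>M density lborel (\<lambda>x. ennreal (gauss_kernel 1 x))"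

lemma pair_distr: "distr P (borel \<Otimes>\<^sub>M borel) (\<lambda>\<omega>. (Z (Xs i) \<omega>, Z (Xi i) \<omega>)) = Q"
proof -
  have iv: "indep_var borel (\<lambda>\<omega>. id (Z (Xs i) \<omega>)) borel (\<lambda>\<omega>. id (Z (Xi i) \<omega>))"
    by (rule indep_pair_compose[OF indep]) auto
  hence "distr P borel (Z (Xs i)) \<Otimes>\<^sub>M distr P borel (Z (Xi i)) = distr P (borel \<Otimes>\<^sub>M borel) (\<lambda>\<omega>. (Z (Xs i) \<omega>, Z (Xi i) \<omega>))"
    unfolding indep_var_distribution_eq by simp
  moreover have "distr P borel (Z (Xs i)) = density lborel (\<lambda>x. ennreal (p x))"
    using dist_x[of i] by (simp add: distributed_distr_eq_density distr_lborel_borel[symmetric])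
  moreover have "distr P borel (Z (Xi i)) = density lborel (\<lambda>x. ennreal (gauss_kernel 1 x))"
    using dist_xi[of i] by (simp add: distributed_distr_eq_density distr_lborel_borel[symmetric])
  ultimately show ?thesis unfolding Q_def by simp
qed

lemma Linf_ident: "distr P borel (Linf i) = distr Q borel phi"
proof -
  have "distr P borel (Linf i) = distr P borel (phi \<circ> (\<lambda>\<omega>. (Z (Xs i) \<omega>, Z (Xi i) \<omega>)))"
    by (simp add: Linf_def[abs_def] phi_def comp_def)
  also have "\<dots> = distr (distr P (borel \<Otimes>\<^sub>M borel) (\<lambda>\<omega>. (Z (Xs i) \<omega>, Z (Xi i) \<omega>))) borel phi"
    by (subst distr_distr) auto
  also have "\<dots> = distr Q borel phi" by (simp add: pair_distr)
  finally show ?thesis .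
qed

lemma ps_p: "prob_space (density lborel (\<lambda>x. ennreal (p x)))"
  using dist_x[of 0] prob_space_distr[of "Z (Xs 0)" lborel]
  by (simp add: distributed_distr_eq_density distributed_measurable)

lemma ps_g: "prob_space (density lborel (\<lambda>x. ennreal (gauss_kernel 1 x)) :: 'a measure)"
  using dist_xi[of 0] prob_space_distr[of "Z (Xi 0)" lborel]
  by (simp add: distributed_distr_eq_density distributed_measurable)

sublocale QQ: pair_prob_space "density lborel (\<lambda>x. ennreal (p x))" "density lborel (\<lambda>x. ennreal (gauss_kernel 1 x)) :: 'a measure"
  using ps_p ps_g by (simp add: pair_prob_space_def pair_sigma_finite_def prob_space_imp_sigma_finite)

end


context ed_setup begin

abbreviation Dp where "Dp \<equiv> density lborel (\<lambda>x. ennreal (p x))"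
abbreviation Dg where "Dg \<equiv> density lborel (\<lambda>x. ennreal (gauss_kernel 1 x)) :: 'a measure"

definition psi :: "'a \<times> 'a \<Rightarrow> real" where "psi z = U_gamma t E (fst z + s *\<^sub>R snd z)"

lemma psi_meas[measurable]: "psi \<in> borel_measurable (borel \<Otimes>\<^sub>M borel)"
  unfolding psi_def by measurable

lemma psi_meas_Q[measurable]: "psi \<in> borel_measurable Q"
  using psi_meas unfolding Q_def by (simp cong: measurable_cong_sets)

lemma psi_int: "integrable Q psi"
proof (subst integrable_iff_bounded, intro conjI)
  show "psi \<in> borel_measurable Q" by measurable
  have "(\<integral>\<^sup>+z. ennreal (norm (psi z)) \<partial>Q) = (\<integral>\<^sup>+x. \<integral>\<^sup>+u. ennreal (norm (psi (x, u))) \<partial>Dg \<partial>Dp)"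
    unfolding Q_def by (rule QQ.M2.nn_integral_fst[symmetric]) (simp add: Q_def[symmetric])
  also have "\<dots> = (\<integral>\<^sup>+x. ennreal (p x) * (\<integral>\<^sup>+u. ennreal (gauss_kernel 1 u) * ennreal \<bar>U_gamma t E (x + s *\<^sub>R u)\<bar> \<partial>lborel) \<partial>lborel)"
    by (simp add: nn_integral_density psi_def)
  also have "\<dots> = (\<integral>\<^sup>+x. ennreal (p x) * (\<integral>\<^sup>+y. ennreal (gauss_kernel t (y - x)) * ennreal \<bar>U_gamma t E y\<bar> \<partial>lborel) \<partial>lborel)"
    unfolding s_def by (subst gauss_cv_nn[OF t_pos]) auto
  also have "\<dots> = (\<integral>\<^sup>+x. \<integral>\<^sup>+y. ennreal (norm ((\<lambda>(x, y). p x * gauss_kernel t (y - x) * U_gamma t E y) (x, y))) \<partial>lborel \<partial>lborel)"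
    by (simp add: nn_integral_cmult[symmetric] ennreal_mult[symmetric] abs_mult p_nonneg gauss_nonneg mult.assoc)
  also have "\<dots> = (\<integral>\<^sup>+z. ennreal (norm ((\<lambda>(x, y). p x * gauss_kernel t (y - x) * U_gamma t E y) z)) \<partial>(lborel \<Otimes>\<^sub>M lborel))"
    by (rule lborel.nn_integral_fst) measurable
  also have "\<dots> < \<infinity>" using UG_integrable unfolding integrable_iff_bounded by simp
  finally show "(\<integral>\<^sup>+z. ennreal (norm (psi z)) \<partial>Q) < \<infinity>" .
qed

lemma psi_integral: "integral\<^sup>L Q psi = (\<integral>x. p x * (\<integral>y. gauss_kernel t (y - x) * U_gamma t E y \<partial>lborel) \<partial>lborel)"
proof -
  have "integral\<^sup>L Q psi = (\<integral>x. \<integral>u. psi (x, u) \<partial>Dg \<partial>Dp)"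
    unfolding Q_def by (rule QQ.integral_fst'[symmetric]) (use psi_int in \<open>simp add: Q_def\<close>)
  also have "\<dots> = (\<integral>x. p x * (\<integral>u. gauss_kernel 1 u * U_gamma t E (x + s *\<^sub>R u) \<partial>lborel) \<partial>lborel)"
    by (simp add: integral_real_density p_nonneg gauss_nonneg psi_def)
  also have "\<dots> = (\<integral>x. p x * (\<integral>y. gauss_kernel t (y - x) * U_gamma t E y \<partial>lborel) \<partial>lborel)"
    unfolding s_def by (subst gauss_cv[OF t_pos]) auto
  finally show ?thesis .
qed

lemma Linf_psi: "Linf i \<omega> = E (Z (Xs i) \<omega>) - psi (Z (Xs i) \<omega>, Z (Xi i) \<omega>)"
  unfolding Linf_def psi_def by simp

lemma E_X_int: "integrable P (\<lambda>\<omega>. E (Z (Xs i) \<omega>))"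
  using distributed_integrable[OF dist_x[of i], of E] E_integrable p_nonneg by simp

lemma E_X_exp: "expectation (\<lambda>\<omega>. E (Z (Xs i) \<omega>)) = (\<integral>x. p x * E x \<partial>lborel)"
  using distributed_integral[OF dist_x[of i], of E] p_nonneg by simp

lemma psi_P_int: "integrable P (\<lambda>\<omega>. psi (Z (Xs i) \<omega>, Z (Xi i) \<omega>))"
proof -
  have "integrable (distr P (borel \<Otimes>\<^sub>M borel) (\<lambda>\<omega>. (Z (Xs i) \<omega>, Z (Xi i) \<omega>))) psi"
    unfolding pair_distr by (rule psi_int)
  thus ?thesis by (subst (asm) integrable_distr_eq) auto
qed

lemma psi_P_exp: "expectation (\<lambda>\<omega>. psi (Z (Xs i) \<omega>, Z (Xi i) \<omega>)) = integral\<^sup>L Q psi"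
proof -
  have "integral\<^sup>L Q psi = integral\<^sup>L (distr P (borel \<Otimes>\<^sub>M borel) (\<lambda>\<omega>. (Z (Xs i) \<omega>, Z (Xi i) \<omega>))) psi"
    unfolding pair_distr ..
  also have "\<dots> = expectation (\<lambda>\<omega>. psi (Z (Xs i) \<omega>, Z (Xi i) \<omega>))"
    by (rule integral_distr) auto
  finally show ?thesis ..
qed

lemma Linf_int: "integrable P (Linf i)"
  unfolding Linf_psi[abs_def] using E_X_int psi_P_int by simp

lemma Linf_exp: "expectation (Linf i) = ED_gamma t p E"
  unfolding Linf_psi[abs_def] ED_gamma_def
  using E_X_int psi_P_int E_X_exp psi_P_exp psi_integral by simp

lemma Linf_slln: "AE \<omega> in P. (\<lambda>n. (\<Sum>i<n. Linf i \<omega>) / real n) \<longlonglongrightarrow> ED_gamma t p E"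
proof -
  have "AE \<omega> in P. (\<lambda>n. (\<Sum>i<n. Linf i \<omega>) / real n) \<longlonglongrightarrow> expectation (Linf 0)"
    by (rule slln[OF Linf_indep _ Linf_int]) (simp add: Linf_ident)
  thus ?thesis by (simp add: Linf_exp)
qed

end


lemma ln_close:
  fixes a g \<delta> \<epsilon> :: real
  assumes \<delta>: "0 < \<delta>" "\<delta> \<le> g" and \<epsilon>: "0 < \<epsilon>" and close: "\<bar>a - g\<bar> < \<delta> * min (1/2) (\<epsilon>/4)"
  shows "\<bar>ln a - ln g\<bar> < \<epsilon>"
proof -
  have g: "0 < g" using \<delta> by simp
  have c1: "\<delta> * min (1/2) (\<epsilon>/4) \<le> \<delta> / 2" using \<delta> by (simp add: min_def)
  have c2: "\<delta> * min (1/2) (\<epsilon>/4) \<le> \<delta> * (\<epsilon>/4)" using \<delta> by (intro mult_left_mono) auto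
  have a: "g / 2 < a" using close c1 \<delta> by linarith
  hence apos: "0 < a" using g by linarith
  have "ln a - ln g = ln (a / g)" using apos g by (simp add: ln_div)
  also have "\<dots> \<le> a / g - 1" using apos g by (intro ln_le_minus_one) simp
  also have "\<dots> = (a - g) / g" using g by (simp add: field_simps)
  also have "\<dots> < \<epsilon>" 
  proof -
    have "(a - g) < \<delta> * (\<epsilon>/4)" using close c2 by linarith
    also have "\<dots> \<le> g * (\<epsilon>/4)" using \<delta> \<epsilon> by (intro mult_right_mono) auto
    also have "\<dots> < g * \<epsilon>" using g \<epsilon> by simp
    finally show ?thesis using g by (metis mult.commute pos_divide_less_eq)
  qed
  finally have up: "ln a - ln g < \<epsilon>" .
  have "ln g - ln a = ln (g / a)" using apos g by (simp add: ln_div)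
  also have "\<dots> \<le> g / a - 1" using apos g by (intro ln_le_minus_one) simp
  also have "\<dots> = (g - a) / a" using apos by (simp add: field_simps)
  also have "\<dots> < \<epsilon>"
  proof -
    have "(g - a) < \<delta> * (\<epsilon>/4)" using close c2 by linarith
    also have "\<dots> \<le> g * (\<epsilon>/4)" using \<delta> \<epsilon> by (intro mult_right_mono) auto
    also have "\<dots> = (g / 2) * (\<epsilon> / 2)" by simp
    also have "\<dots> \<le> (g / 2) * \<epsilon>" using g \<epsilon> by (intro mult_left_mono) auto
    also have "\<dots> < a * \<epsilon>" using a \<epsilon> by (intro mult_strict_right_mono) auto
    finally show ?thesis using apos by (metis mult.commute pos_divide_less_eq)
  qed
  finally have low: "ln g - ln a < \<epsilon>" .
  from up low show ?thesis by linarith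
qed

context prob_space begin

lemma sum_sq_orth:
  fixes D :: "'i \<Rightarrow> 'a \<Rightarrow> real"
  assumes fin: "finite I"
    and meas: "\<And>i. i \<in> I \<Longrightarrow> D i \<in> borel_measurable M"
    and bnd: "\<And>i \<omega>. i \<in> I \<Longrightarrow> \<bar>D i \<omega>\<bar> \<le> B"
    and orth: "\<And>i j. i \<in> I \<Longrightarrow> j \<in> I \<Longrightarrow> i \<noteq> j \<Longrightarrow> expectation (\<lambda>\<omega>. D i \<omega> * D j \<omega>) = 0"
  shows "expectation (\<lambda>\<omega>. (\<Sum>i\<in>I. D i \<omega>)^2) = (\<Sum>i\<in>I. expectation (\<lambda>\<omega>. (D i \<omega>)^2))"
proof -
  have intDD: "integrable M (\<lambda>\<omega>. D i \<omega> * D j \<omega>)" if "i \<in> I" "j \<in> I" for i j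
    using that bnd meas by (intro integrable_const_bound[where B="B * B"])
      (auto simp: abs_mult intro!: mult_mono order_trans[OF abs_ge_zero bnd])
  have "(\<lambda>\<omega>. (\<Sum>i\<in>I. D i \<omega>)^2) = (\<lambda>\<omega>. \<Sum>i\<in>I. \<Sum>j\<in>I. D i \<omega> * D j \<omega>)"
    by (simp add: power2_eq_square sum_product)
  hence "expectation (\<lambda>\<omega>. (\<Sum>i\<in>I. D i \<omega>)^2) = (\<Sum>i\<in>I. \<Sum>j\<in>I. expectation (\<lambda>\<omega>. D i \<omega> * D j \<omega>))"
    using intDD by (simp add: Bochner_Integration.integral_sum)
  also have "\<dots> = (\<Sum>i\<in>I. expectation (\<lambda>\<omega>. D i \<omega> * D i \<omega>))"
  proof (rule sum.cong[OF refl])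
    fix i assume i: "i \<in> I"
    have "(\<Sum>j\<in>I. expectation (\<lambda>\<omega>. D i \<omega> * D j \<omega>)) = expectation (\<lambda>\<omega>. D i \<omega> * D i \<omega>) + (\<Sum>j\<in>I-{i}. expectation (\<lambda>\<omega>. D i \<omega> * D j \<omega>))"
      using fin i by (simp add: sum.remove)
    also have "(\<Sum>j\<in>I-{i}. expectation (\<lambda>\<omega>. D i \<omega> * D j \<omega>)) = 0"
      using orth i by (intro sum.neutral) auto
    finally show "(\<Sum>j\<in>I. expectation (\<lambda>\<omega>. D i \<omega> * D j \<omega>)) = expectation (\<lambda>\<omega>. D i \<omega> * D i \<omega>)" by simp
  qed
  finally show ?thesis by (simp add: power2_eq_square)
qed

lemma indep_integral_fubini:
  assumes iv: "indep_var N1 R N2 V" and F[measurable]: "F \<in> borel_measurable (N1 \<Otimes>\<^sub>M N2)"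
    and bnd: "\<And>z. \<bar>F z\<bar> \<le> (B::real)"
  shows "expectation (\<lambda>\<omega>. F (R \<omega>, V \<omega>)) = (\<integral>r. (\<integral>v. F (r, v) \<partial>distr M N2 V) \<partial>distr M N1 R)"
proof -
  have rv1[measurable]: "R \<in> measurable M N1" and rv2[measurable]: "V \<in> measurable M N2"
    using iv by (auto dest: indep_var_rv1 indep_var_rv2)
  interpret D1: prob_space "distr M N1 R" by (rule prob_space_distr) simp
  interpret D2: prob_space "distr M N2 V" by (rule prob_space_distr) simp
  interpret PP: pair_prob_space "distr M N1 R" "distr M N2 V" ..
  have eq: "distr M N1 R \<Otimes>\<^sub>M distr M N2 V = distr M (N1 \<Otimes>\<^sub>M N2) (\<lambda>\<omega>. (R \<omega>, V \<omega>))"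
    using iv unfolding indep_var_distribution_eq by simp
  have Fm2: "F \<in> borel_measurable (distr M N1 R \<Otimes>\<^sub>M distr M N2 V)"
    unfolding eq by simp
  have int: "integrable (distr M N1 R \<Otimes>\<^sub>M distr M N2 V) F"
    using bnd Fm2 by (intro PP.P.integrable_const_bound[where B=B]) auto
  have "expectation (\<lambda>\<omega>. F (R \<omega>, V \<omega>)) = integral\<^sup>L (distr M (N1 \<Otimes>\<^sub>M N2) (\<lambda>\<omega>. (R \<omega>, V \<omega>))) F"
    by (rule integral_distr[symmetric]) auto
  also have "\<dots> = integral\<^sup>L (distr M N1 R \<Otimes>\<^sub>M distr M N2 V) F" unfolding eq ..
  also have "\<dots> = (\<integral>r. (\<integral>v. F (r, v) \<partial>distr M N2 V) \<partial>distr M N1 R)"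
    by (rule PP.integral_fst'[OF int, symmetric])
  finally show ?thesis .
qed

end


context ed_setup begin

definition Yv :: "nat \<Rightarrow> 'w \<Rightarrow> 'a" where "Yv i \<omega> = Z (Xs i) \<omega> + s *\<^sub>R Z (Xi i) \<omega>"

definition Dj :: "nat \<Rightarrow> nat \<Rightarrow> 'w \<Rightarrow> real" where
  "Dj i j \<omega> = exp (- E (Yv i \<omega> + s *\<^sub>R Z (Xi' i j) \<omega>)) - G (Yv i \<omega>)"

lemma Yv_meas[measurable]: "Yv i \<in> borel_measurable P" unfolding Yv_def by measurable
lemma Dj_meas[measurable]: "Dj i j \<in> borel_measurable P" unfolding Dj_def by measurable

lemma diff_bnd: "\<bar>exp (- E x) - G y\<bar> \<le> C"
  using C_bound[of x] G_le[of y] G_pos[of y] exp_gt_zero[of "- E x"] by linarith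

lemma Dj_bnd: "\<bar>Dj i j \<omega>\<bar> \<le> C"
  unfolding Dj_def by (rule diff_bnd)

lemma Dg_eq: "distr P borel (Z (Xi' i j)) = Dg"
  using dist_xi'[of i j] by (simp add: distributed_distr_eq_density distr_lborel_borel[symmetric])

lemma inner_zero: "(\<integral>v. (exp (- E (y + s *\<^sub>R v)) - G y) * c \<partial>Dg) = 0"
proof -
  have "(\<integral>v. (exp (- E (y + s *\<^sub>R v)) - G y) * c \<partial>Dg) = (\<integral>v. gauss_kernel 1 v * ((exp (- E (y + s *\<^sub>R v)) - G y) * c) \<partial>lborel)"
    by (subst integral_real_density) (auto simp: gauss_nonneg)
  also have "\<dots> = (\<integral>v. c * (gauss_kernel 1 v * exp (- E (y + s *\<^sub>R v))) - (c * G y) * gauss_kernel 1 v \<partial>lborel)"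
    by (rule Bochner_Integration.integral_cong) (auto simp: algebra_simps)
  also have "\<dots> = c * (\<integral>v. gauss_kernel 1 v * exp (- E (y + s *\<^sub>R v)) \<partial>lborel) - (c * G y) * (\<integral>v. gauss_kernel 1 (v::'a) \<partial>lborel)"
    using h_int[of y] gauss1_int by simp
  also have "\<dots> = 0" using G_alt[of y] gauss1_integral by simp
  finally show ?thesis .
qed

lemma Dj_orth:
  assumes jk: "j \<noteq> k"
  shows "expectation (\<lambda>\<omega>. Dj i j \<omega> * Dj i k \<omega>) = 0"
proof -
  define A where "A = {Xs i, Xi i, Xi' i k}"
  define B where "B = {Xi' i j}"
  have AB: "A \<inter> B = {}" using jk by (auto simp: A_def B_def)
  have iv0: "indep_var (Pi\<^sub>M A (\<lambda>_. borel)) (\<lambda>\<omega>. restrict (\<lambda>l. Z l \<omega>) A) (Pi\<^sub>M B (\<lambda>_. borel)) (\<lambda>\<omega>. restrict (\<lambda>l. Z l \<omega>) B)"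
    by (rule indep_var_restrict[OF indep AB]) auto
  define yf where "yf f = f (Xs i) + s *\<^sub>R f (Xi i)" for f :: "idx \<Rightarrow> 'a"
  define H where "H f v = (exp (- E (yf f + s *\<^sub>R v)) - G (yf f)) * (exp (- E (yf f + s *\<^sub>R f (Xi' i k))) - G (yf f))" for f v
  define F where "F z = H (fst z) (snd z (Xi' i j))" for z :: "(idx \<Rightarrow> 'a) \<times> (idx \<Rightarrow> 'a)"
  have Fm: "F \<in> borel_measurable (Pi\<^sub>M A (\<lambda>_. borel) \<Otimes>\<^sub>M Pi\<^sub>M B (\<lambda>_. borel))"
    unfolding F_def H_def yf_def A_def B_def by measurable
  have Fb: "\<bar>F z\<bar> \<le> C * C" for z
    unfolding F_def H_def abs_mult using C_pos by (intro mult_mono diff_bnd) auto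
  have Hm[measurable]: "H f \<in> borel_measurable borel" for f unfolding H_def by measurable
  have inner: "(\<integral>g. F (r, g) \<partial>distr P (Pi\<^sub>M B (\<lambda>_. borel)) (\<lambda>\<omega>. restrict (\<lambda>l. Z l \<omega>) B)) = 0" for r
  proof -
    have "(\<integral>g. F (r, g) \<partial>distr P (Pi\<^sub>M B (\<lambda>_. borel)) (\<lambda>\<omega>. restrict (\<lambda>l. Z l \<omega>) B)) = (\<integral>\<omega>. H r (Z (Xi' i j) \<omega>) \<partial>P)"
      by (subst integral_distr) (auto simp: F_def B_def)
    also have "\<dots> = (\<integral>v. H r v \<partial>distr P borel (Z (Xi' i j)))"
      by (subst integral_distr) auto
    also have "\<dots> = 0" unfolding Dg_eq H_def by (rule inner_zero)
    finally show ?thesis .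
  qed
  have "expectation (\<lambda>\<omega>. Dj i j \<omega> * Dj i k \<omega>) = expectation (\<lambda>\<omega>. F (restrict (\<lambda>l. Z l \<omega>) A, restrict (\<lambda>l. Z l \<omega>) B))"
    by (simp add: F_def H_def Dj_def yf_def Yv_def A_def B_def)
  also have "\<dots> = (\<integral>r. (\<integral>g. F (r, g) \<partial>distr P (Pi\<^sub>M B (\<lambda>_. borel)) (\<lambda>\<omega>. restrict (\<lambda>l. Z l \<omega>) B)) \<partial>distr P (Pi\<^sub>M A (\<lambda>_. borel)) (\<lambda>\<omega>. restrict (\<lambda>l. Z l \<omega>) A))"
    by (rule indep_integral_fubini[OF iv0 Fm Fb])
  also have "\<dots> = 0" by (simp add: inner)
  finally show ?thesis .
qed

lemma Dsum_sq: "expectation (\<lambda>\<omega>. (\<Sum>j<M. Dj i j \<omega>)^2) \<le> real M * C^2"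
proof -
  have "expectation (\<lambda>\<omega>. (\<Sum>j<M. Dj i j \<omega>)^2) = (\<Sum>j<M. expectation (\<lambda>\<omega>. (Dj i j \<omega>)^2))"
    by (rule sum_sq_orth[where B=C]) (auto intro: Dj_bnd Dj_orth)
  also have "\<dots> \<le> (\<Sum>j<M. C^2)"
  proof (rule sum_mono)
    fix j
    have "expectation (\<lambda>\<omega>. (Dj i j \<omega>)^2) \<le> expectation (\<lambda>\<omega>. C^2)"
    proof (rule Bochner_Integration.integral_mono)
      show "integrable P (\<lambda>\<omega>. (Dj i j \<omega>)^2)"
      proof (rule integrable_const_bound[where B="C^2"])
        show "AE \<omega> in P. norm ((Dj i j \<omega>)^2) \<le> C^2"
        proof (rule AE_I2)
          fix \<omega> show "norm ((Dj i j \<omega>)^2) \<le> C^2"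
            using Dj_bnd[of i j \<omega>] C_pos by (simp add: abs_le_square_iff[symmetric])
        qed
      qed simp
      show "(Dj i j \<omega>)^2 \<le> C^2" for \<omega>
        using Dj_bnd[of i j \<omega>] C_pos by (metis abs_le_square_iff abs_of_pos)
    qed simp
    thus "expectation (\<lambda>\<omega>. (Dj i j \<omega>)^2) \<le> C^2" by (simp add: prob_space)
  qed
  also have "\<dots> = real M * C^2" by simp
  finally show ?thesis .
qed

end


context ed_setup begin

definition Tm :: "nat \<Rightarrow> nat \<Rightarrow> 'w \<Rightarrow> real" where
  "Tm M i \<omega> = ln (w / real M + (1 / real M) * (\<Sum>j<M. exp (E (Z (Xs i) \<omega>)
                   - E (Z (Xs i) \<omega> + sqrt t *\<^sub>R Z (Xi i) \<omega> + sqrt t *\<^sub>R Z (Xi' i j) \<omega>))))"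

lemma Tm_meas[measurable]: "Tm M i \<in> borel_measurable P"
  unfolding Tm_def by measurable

lemma emp_Tm: "emp_loss t M w E Z N \<omega> = (1 / real N) * (\<Sum>i<N. Tm M i \<omega>)"
  unfolding emp_loss_def Tm_def ..

lemma pointwise:
  assumes M: "0 < M" and \<delta>: "0 < \<delta>" "\<delta> \<le> G (Yv i \<omega>)" and \<epsilon>: "0 < \<epsilon>"
    and c: "c = \<delta> * min (1/2) (\<epsilon>/4)"
    and wC: "w * C / real M < c / 2"
    and Bc: "\<bar>(1 / real M) * (\<Sum>j<M. Dj i j \<omega>)\<bar> < c / 2"
  shows "\<bar>Tm M i \<omega> - Linf i \<omega>\<bar> < \<epsilon>"
proof -
  define x where "x = E (Z (Xs i) \<omega>)"
  define y where "y = Yv i \<omega>"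
  define hj where "hj j = exp (- E (y + s *\<^sub>R Z (Xi' i j) \<omega>))" for j
  define B where "B = (1 / real M) * (\<Sum>j<M. hj j)"
  define a where "a = w * exp (- x) / real M + B"
  have Mpos: "real M > 0" using M by simp
  have sumexp: "(\<Sum>j<M. exp (E (Z (Xs i) \<omega>) - E (Z (Xs i) \<omega> + sqrt t *\<^sub>R Z (Xi i) \<omega> + sqrt t *\<^sub>R Z (Xi' i j) \<omega>)))
      = exp x * (\<Sum>j<M. hj j)"
    unfolding sum_distrib_left
    by (intro sum.cong refl) (simp add: x_def hj_def y_def Yv_def s_def exp_diff exp_minus field_simps)
  have BG: "(1 / real M) * (\<Sum>j<M. Dj i j \<omega>) = B - G y"
    using Mpos by (simp add: Dj_def B_def hj_def y_def sum_subtractf field_simps)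
  have ex: "exp x * exp (- x) = 1" by (simp add: exp_minus)
  have arg: "w / real M + (1 / real M) * (exp x * (\<Sum>j<M. hj j)) = exp x * a"
    unfolding a_def B_def using ex Mpos by (simp add: field_simps)
  have close: "\<bar>a - G y\<bar> < c"
  proof -
    define u where "u = w * exp (- x) / real M"
    have u1: "u \<le> w * C / real M"
      using C_bound[of "Z (Xs i) \<omega>"] w_nonneg Mpos unfolding x_def u_def
      by (intro divide_right_mono mult_left_mono) auto
    have u0: "0 \<le> u" using w_nonneg Mpos by (simp add: u_def)
    have b: "\<bar>B - G y\<bar> < c / 2" using Bc unfolding BG .
    have "\<bar>a - G y\<bar> = \<bar>u + (B - G y)\<bar>" unfolding a_def u_def by simp
    also have "\<dots> \<le> \<bar>u\<bar> + \<bar>B - G y\<bar>" by (rule abs_triangle_ineq)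
    also have "\<dots> = u + \<bar>B - G y\<bar>" using u0 by simp
    also have "\<dots> < c / 2 + c / 2" using u1 wC b by linarith
    finally show ?thesis by simp
  qed
  have Gy: "\<delta> \<le> G y" using \<delta> by (simp add: y_def)
  have "\<bar>ln a - ln (G y)\<bar> < \<epsilon>" using ln_close[OF \<delta>(1) Gy \<epsilon>] close c by simp
  moreover have apos: "a > 0"
  proof -
    have "c \<le> \<delta> / 2" using c \<delta> by (simp add: min_def)
    thus ?thesis using close Gy \<delta> by linarith
  qed
  moreover have "Tm M i \<omega> = x + ln a"
    unfolding Tm_def sumexp arg using apos by (simp add: ln_mult)
  moreover have "Linf i \<omega> = x + ln (G y)"
    unfolding Linf_def U_G x_def y_def Yv_def by simp
  ultimately show ?thesis by simp
qed

end


context ed_setup begin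

lemma small_G:
  assumes \<eta>: "0 < \<eta>"
  shows "\<exists>\<delta>>0. prob {\<omega>\<in>space P. G (Yv i \<omega>) < \<delta>} < \<eta>"
proof -
  define A where "A n = {\<omega>\<in>space P. G (Yv i \<omega>) < 1 / real (Suc n)}" for n
  have As: "range A \<subseteq> sets P" unfolding A_def by auto
  have dec: "decseq A"
    unfolding decseq_def A_def
  proof (intro allI impI subsetI)
    fix m n :: nat and \<omega> assume mn: "m \<le> n" and w: "\<omega> \<in> {\<omega> \<in> space P. G (Yv i \<omega>) < 1 / real (Suc n)}"
    have "1 / real (Suc n) \<le> 1 / real (Suc m)" using mn by (simp add: frac_le)
    with w show "\<omega> \<in> {\<omega> \<in> space P. G (Yv i \<omega>) < 1 / real (Suc m)}" by auto
  qed
  have empty: "(\<Inter>n. A n) = {}"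
  proof (rule ccontr)
    assume "(\<Inter>n. A n) \<noteq> {}"
    then obtain \<omega> where "\<And>n. \<omega> \<in> A n" by blast
    hence lt: "\<And>n. G (Yv i \<omega>) < 1 / real (Suc n)" unfolding A_def by auto
    obtain n where "inverse (real (Suc n)) < G (Yv i \<omega>)" using reals_Archimedean[OF G_pos] by blast
    with lt[of n] show False by (simp add: inverse_eq_divide)
  qed
  have "(\<lambda>n. prob (A n)) \<longlonglongrightarrow> prob (\<Inter>n. A n)" by (rule finite_Lim_measure_decseq[OF As dec])
  hence "(\<lambda>n. prob (A n)) \<longlonglongrightarrow> 0" unfolding empty by simp
  from order_tendstoD(2)[OF this \<eta>] obtain n where "prob (A n) < \<eta>"
    by (auto simp: eventually_sequentially)
  thus ?thesis unfolding A_def by (intro exI[of _ "1 / real (Suc n)"]) auto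
qed

lemma inner_prob:
  assumes \<epsilon>: "0 < \<epsilon>" and \<eta>: "0 < \<eta>"
  shows "\<exists>M0. \<forall>M\<ge>M0. prob {\<omega>\<in>space P. \<epsilon> \<le> \<bar>Tm M i \<omega> - Linf i \<omega>\<bar>} < \<eta>"
proof -
  obtain \<delta> where \<delta>: "0 < \<delta>" and pA: "prob {\<omega>\<in>space P. G (Yv i \<omega>) < \<delta>} < \<eta> / 2"
    using small_G[of "\<eta>/2"] \<eta> by auto
  define c where "c = \<delta> * min (1/2) (\<epsilon>/4)"
  have c: "0 < c" using \<delta> \<epsilon> by (simp add: c_def)
  obtain n1 :: nat where n1: "w * C / (c/2) < real n1" using reals_Archimedean2 by blast
  obtain n2 :: nat where n2: "C^2 / ((c/2)^2 * (\<eta>/2)) < real n2" using reals_Archimedean2 by blast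
  show ?thesis
  proof (intro exI[of _ "Suc (max n1 n2)"] allI impI)
    fix M assume M: "Suc (max n1 n2) \<le> M"
    have Mpos: "0 < M" and Mr: "real M > 0" using M by auto
    have M1: "w * C / (c/2) < real M" using n1 M by linarith
    have M2: "C^2 / ((c/2)^2 * (\<eta>/2)) < real M" using n2 M by linarith
    have wC: "w * C / real M < c / 2"
      using M1 c Mr by (simp add: divide_less_eq mult.commute)
    define S where "S \<omega> = (1 / real M) * (\<Sum>j<M. Dj i j \<omega>)" for \<omega>
    have S_meas[measurable]: "S \<in> borel_measurable P" unfolding S_def by measurable
    define A' where "A' = {\<omega>\<in>space P. G (Yv i \<omega>) < \<delta>}"
    define B2 where "B2 = {\<omega>\<in>space P. c / 2 \<le> \<bar>S \<omega>\<bar>}"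
    have A'_sets[measurable]: "A' \<in> sets P" unfolding A'_def by measurable
    have B2_sets[measurable]: "B2 \<in> sets P" unfolding B2_def by measurable
    have sub: "{\<omega>\<in>space P. \<epsilon> \<le> \<bar>Tm M i \<omega> - Linf i \<omega>\<bar>} \<subseteq> A' \<union> B2"
    proof
      fix \<omega> assume om: "\<omega> \<in> {\<omega>\<in>space P. \<epsilon> \<le> \<bar>Tm M i \<omega> - Linf i \<omega>\<bar>}"
      show "\<omega> \<in> A' \<union> B2"
      proof (rule ccontr)
        assume "\<omega> \<notin> A' \<union> B2"
        hence "\<delta> \<le> G (Yv i \<omega>)" "\<bar>S \<omega>\<bar> < c / 2" using om by (auto simp: A'_def B2_def)
        from pointwise[OF Mpos \<delta> this(1) \<epsilon> c_def wC this(2)[unfolded S_def]]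
        show False using om by simp
      qed
    qed
    have ES2: "expectation (\<lambda>\<omega>. (S \<omega>)^2) \<le> C^2 / real M"
    proof -
      have "expectation (\<lambda>\<omega>. (S \<omega>)^2) = expectation (\<lambda>\<omega>. (\<Sum>j<M. Dj i j \<omega>)^2) / (real M)^2"
        unfolding S_def by (simp add: power_mult_distrib power_divide)
      also have "\<dots> \<le> real M * C^2 / (real M)^2"
        by (intro divide_right_mono Dsum_sq) simp
      also have "\<dots> = C^2 / real M" using Mr by (simp add: power2_eq_square)
      finally show ?thesis .
    qed
    have Sbnd: "\<bar>S \<omega>\<bar> \<le> C" for \<omega>
    proof -
      have "\<bar>\<Sum>j<M. Dj i j \<omega>\<bar> \<le> (\<Sum>j<M. \<bar>Dj i j \<omega>\<bar>)" by (rule sum_abs)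
      also have "\<dots> \<le> (\<Sum>j<M. C)" by (intro sum_mono Dj_bnd)
      finally have "\<bar>\<Sum>j<M. Dj i j \<omega>\<bar> \<le> real M * C" by simp
      thus ?thesis unfolding S_def using Mr by (simp add: abs_mult divide_le_eq mult.commute)
    qed
    have intS2: "integrable P (\<lambda>\<omega>. (S \<omega>)^2)"
    proof (rule integrable_const_bound[where B="C^2"])
      show "AE \<omega> in P. norm ((S \<omega>)^2) \<le> C^2"
      proof (rule AE_I2)
        fix \<omega> show "norm ((S \<omega>)^2) \<le> C^2"
          using Sbnd[of \<omega>] C_pos by (simp add: abs_le_square_iff[symmetric])
      qed
    qed simp
    have B2eq: "B2 = {\<omega>\<in>space P. (c/2)^2 \<le> (S \<omega>)^2}"
      unfolding B2_def using c by (auto simp: abs_le_square_iff[symmetric])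
    have pB2: "prob B2 < \<eta> / 2"
    proof -
      have "prob B2 \<le> expectation (\<lambda>\<omega>. (S \<omega>)^2) / (c/2)^2"
        unfolding B2eq using integral_Markov_inequality_measure[OF intS2 sets.top _, of "(c/2)^2"] c by simp
      also have "\<dots> \<le> (C^2 / real M) / (c/2)^2"
        using ES2 c by (intro divide_right_mono) auto
      also have "\<dots> < \<eta> / 2"
      proof -
        have "C^2 / ((c/2)^2 * (\<eta>/2)) < real M" by (rule M2)
        hence "C^2 < real M * ((c/2)^2 * (\<eta>/2))" using c \<eta> by (simp add: divide_less_eq)
        thus ?thesis using c \<eta> Mr by (simp add: field_simps)
      qed
      finally show ?thesis .
    qed
    have "prob {\<omega>\<in>space P. \<epsilon> \<le> \<bar>Tm M i \<omega> - Linf i \<omega>\<bar>} \<le> prob (A' \<union> B2)"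
      by (rule finite_measure_mono[OF sub]) simp
    also have "\<dots> \<le> prob A' + prob B2" by (rule measure_Un_le) simp_all
    also have "\<dots> < \<eta>" using pA pB2 unfolding A'_def by simp
    finally show "prob {\<omega>\<in>space P. \<epsilon> \<le> \<bar>Tm M i \<omega> - Linf i \<omega>\<bar>} < \<eta>" .
  qed
qed

end


context ed_setup begin

lemma main:
  "\<exists>Mf :: nat \<Rightarrow> nat. AE \<omega> in P. \<forall>\<epsilon>>0. \<exists>N0. \<forall>N\<ge>N0.
       \<bar>emp_loss t (Mf N) w E Z N \<omega> - ED_gamma t p E\<bar> < \<epsilon>"
proof -
  have ex: "\<exists>M. \<forall>i<N. prob {\<omega>\<in>space P. 1 / real (Suc N) \<le> \<bar>Tm M i \<omega> - Linf i \<omega>\<bar>} < (1/2)^N / real (Suc N)" for N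
  proof -
    have "\<forall>i. \<exists>M0. \<forall>M\<ge>M0. prob {\<omega>\<in>space P. 1 / real (Suc N) \<le> \<bar>Tm M i \<omega> - Linf i \<omega>\<bar>} < (1/2)^N / real (Suc N)"
      by (intro allI inner_prob) auto
    then obtain M0 where M0: "\<And>i M. M \<ge> M0 i \<Longrightarrow> prob {\<omega>\<in>space P. 1 / real (Suc N) \<le> \<bar>Tm M i \<omega> - Linf i \<omega>\<bar>} < (1/2)^N / real (Suc N)"
      by metis
    show ?thesis
    proof (intro exI allI impI)
      fix i assume "i < N"
      hence "M0 i \<le> (\<Sum>k<N. M0 k)" by (intro member_le_sum) auto
      thus "prob {\<omega>\<in>space P. 1 / real (Suc N) \<le> \<bar>Tm (\<Sum>k<N. M0 k) i \<omega> - Linf i \<omega>\<bar>} < (1/2)^N / real (Suc N)"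
        by (rule M0)
    qed
  qed
  then obtain Mf where Mf: "\<And>N i. i < N \<Longrightarrow> prob {\<omega>\<in>space P. 1 / real (Suc N) \<le> \<bar>Tm (Mf N) i \<omega> - Linf i \<omega>\<bar>} < (1/2)^N / real (Suc N)"
    by metis
  define Bad where "Bad N = (\<Union>i\<in>{..<N}. {\<omega>\<in>space P. 1 / real (Suc N) \<le> \<bar>Tm (Mf N) i \<omega> - Linf i \<omega>\<bar>})" for N
  have Bad_sets[measurable]: "Bad N \<in> sets P" for N unfolding Bad_def by measurable
  have pBad: "prob (Bad N) \<le> (1/2)^N" for N
  proof -
    have "prob (Bad N) \<le> (\<Sum>i<N. prob {\<omega>\<in>space P. 1 / real (Suc N) \<le> \<bar>Tm (Mf N) i \<omega> - Linf i \<omega>\<bar>})"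
      unfolding Bad_def by (rule measure_UNION_le) auto
    also have "\<dots> \<le> (\<Sum>i<N. (1/2)^N / real (Suc N))" by (intro sum_mono less_imp_le Mf) auto
    also have "\<dots> = real N * (1/2)^N / real (Suc N)" by simp
    also have "\<dots> \<le> (1/2)^N" by (simp add: divide_le_eq)
    finally show ?thesis .
  qed
  have "summable (\<lambda>N. prob (Bad N))"
    by (rule summable_comparison_test'[OF summable_geometric[of "1/2"], of 0]) (use pBad in auto)
  from borel_cantelli_AE1[OF Bad_sets _ this]
  have BC: "AE \<omega> in P. eventually (\<lambda>N. \<omega> \<in> space P - Bad N) sequentially"
    by (simp add: emeasure_eq_measure)
  have "AE \<omega> in P. \<forall>\<epsilon>>0. \<exists>N0. \<forall>N\<ge>N0. \<bar>emp_loss t (Mf N) w E Z N \<omega> - ED_gamma t p E\<bar> < \<epsilon>"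
    using BC Linf_slln
  proof eventually_elim
    case (elim \<omega>)
    obtain N1 where N1: "\<And>N. N \<ge> N1 \<Longrightarrow> \<omega> \<in> space P - Bad N" using elim(1) by (auto simp: eventually_sequentially)
    have diff: "(\<lambda>N. emp_loss t (Mf N) w E Z N \<omega> - (\<Sum>i<N. Linf i \<omega>) / real N) \<longlonglongrightarrow> 0"
    proof (rule LIMSEQ_I)
      fix r :: real assume r: "0 < r"
      obtain n where n: "inverse (real (Suc n)) < r" using reals_Archimedean[OF r] by blast
      show "\<exists>no. \<forall>N\<ge>no. norm (emp_loss t (Mf N) w E Z N \<omega> - (\<Sum>i<N. Linf i \<omega>) / real N - 0) < r"
      proof (intro exI allI impI)
        fix N assume N: "max N1 (Suc n) \<le> N"
        hence good: "\<And>i. i < N \<Longrightarrow> \<bar>Tm (Mf N) i \<omega> - Linf i \<omega>\<bar> < 1 / real (Suc N)"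
          using N1[of N] by (auto simp: Bad_def not_le)
        have Npos: "real N > 0" using N by simp
        have "emp_loss t (Mf N) w E Z N \<omega> - (\<Sum>i<N. Linf i \<omega>) / real N = (\<Sum>i<N. Tm (Mf N) i \<omega> - Linf i \<omega>) / real N"
          unfolding emp_Tm by (simp add: sum_subtractf diff_divide_distrib)
        hence "\<bar>emp_loss t (Mf N) w E Z N \<omega> - (\<Sum>i<N. Linf i \<omega>) / real N\<bar> = \<bar>\<Sum>i<N. Tm (Mf N) i \<omega> - Linf i \<omega>\<bar> / real N"
          by (simp add: abs_divide)
        also have "\<dots> \<le> (\<Sum>i<N. \<bar>Tm (Mf N) i \<omega> - Linf i \<omega>\<bar>) / real N"
          using Npos by (intro divide_right_mono sum_abs) auto
        also have "\<dots> \<le> (\<Sum>i<N. 1 / real (Suc N)) / real N"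
          using Npos good by (intro divide_right_mono sum_mono less_imp_le) auto
        also have "\<dots> = 1 / real (Suc N)" using Npos by simp
        also have "\<dots> \<le> inverse (real (Suc n))" using N by (simp add: inverse_eq_divide frac_le)
        also have "\<dots> < r" by (rule n)
        finally show "norm (emp_loss t (Mf N) w E Z N \<omega> - (\<Sum>i<N. Linf i \<omega>) / real N - 0) < r" by simp
      qed
    qed
    have "(\<lambda>N. (emp_loss t (Mf N) w E Z N \<omega> - (\<Sum>i<N. Linf i \<omega>) / real N) + (\<Sum>i<N. Linf i \<omega>) / real N) \<longlonglongrightarrow> 0 + ED_gamma t p E"
      by (intro tendsto_add diff elim(2))
    hence lim: "(\<lambda>N. emp_loss t (Mf N) w E Z N \<omega>) \<longlonglongrightarrow> ED_gamma t p E" by simp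
    show ?case
    proof (intro allI impI)
      fix \<epsilon> :: real assume "0 < \<epsilon>"
      from LIMSEQ_D[OF lim this] show "\<exists>N0. \<forall>N\<ge>N0. \<bar>emp_loss t (Mf N) w E Z N \<omega> - ED_gamma t p E\<bar> < \<epsilon>"
        by auto
    qed
  qed
  thus ?thesis by blast
qed

end

theorem theorem3:
  fixes P :: "'w measure" and Z :: "idx \<Rightarrow> 'w \<Rightarrow> 'a::euclidean_space"
    and p :: "'a \<Rightarrow> real" and E :: "'a \<Rightarrow> real" and t w :: real
  assumes "prob_space P"
    and p_meas: "p \<in> borel_measurable lborel"
    and p_nonneg: "\<And>x. 0 \<le> p x"
    and p_int: "(\<integral>\<^sup>+ x. ennreal (p x) \<partial>lborel) = 1"
    and E_meas: "E \<in> borel_measurable borel"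
    and E_bdd: "\<exists>C. \<forall>x. exp (- E x) \<le> C"
    and E_integrable: "integrable lborel (\<lambda>x. p x * E x)"
    and UG_integrable: "integrable (lborel \<Otimes>\<^sub>M lborel)
          (\<lambda>(x, y). p x * gauss_kernel t (y - x) * U_gamma t E y)"
    and t_pos: "t > 0" and w_nonneg: "w \<ge> 0"
    and indep: "prob_space.indep_vars P (\<lambda>_. borel) Z UNIV"
    and dist_x: "\<And>i. distributed P lborel (Z (Xs i)) (\<lambda>x. ennreal (p x))"
    and dist_xi: "\<And>i. distributed P lborel (Z (Xi i)) (\<lambda>x. ennreal (gauss_kernel 1 x))"
    and dist_xi': "\<And>i j. distributed P lborel (Z (Xi' i j)) (\<lambda>x. ennreal (gauss_kernel 1 x))"
  shows "\<exists>Mf :: nat \<Rightarrow> nat. AE \<omega> in P. \<forall>\<epsilon>>0. \<exists>N0. \<forall>N\<ge>N0.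
           \<bar>emp_loss t (Mf N) w E Z N \<omega> - ED_gamma t p E\<bar> < \<epsilon>"
proof -
  have "ed_setup P Z p E t w"
    unfolding ed_setup_def ed_setup_axioms_def using assms by blast
  then interpret ed_setup P Z p E t w .
  show ?thesis by (rule main)
qed


end
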